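(* Let $K$ be an algebraically closed field and let $d,n$ be integers with $1<d<n$, $\gcd(n,d)=1$ and $\operatorname{char}(K)\nmid d$. Let $m>n$ be an integer divisible by $d$, and put $\ell:=m/d$. Assume $n-m+\ell\geq 0$. If $\operatorname{char}(K)=0$ or $\operatorname{char}(K)>n$, then $m$ is $(n,d)$-reachable over $K$.
   Context: For a polynomial $f(x)\in K[x]$ of degree $n$ without repeated roots, $\mathcal{C}_{f,d}$ denotes the smooth projective model of the affine curve $y^d=f(x)$; it has a unique point at infinity $O$. $\mathcal{C}_{f,d}$ is identified with its image in its Jacobian $J(\mathcal{C}_{f,d})$ via $Q\mapsto \operatorname{cl}((Q)-(O))$ (linear equivalence class), and a point $Q\in\mathcal{C}_{f,d}(K)$ has order $m$ if $\operatorname{cl}((Q)-(O))$ has order $m$ in $J(\mathcal{C}_{f,d})(K)$. An integer $m>1$ is called $(n,d)$-reachable over $K$ if there exists a monic polynomial $f(x)\in K[x]$ of degree $n$ without repeated roots such that $\mathcal{C}_{f,d}(K)$ contains a point of order $m$. *)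

theory Defs
  imports "HOL-Computational_Algebra.Polynomial"
begin

text \<open>Curve C_{f,d}: affine model y^d = f(x), plus the unique point at infinity O
  (unique since gcd(n,d)=1). A rational function regular outside O is an element of
  the coordinate ring K[x,y]/(y^d - f), uniquely written as sum_{i<d} a_i(x) y^i,
  encoded by hs :: nat => 'a poly (only indices i < d are used).\<close>

definition on_curve :: "'a::field poly \<Rightarrow> nat \<Rightarrow> 'a \<Rightarrow> 'a \<Rightarrow> bool" where
  "on_curve f d a b \<longleftrightarrow> b ^ d = poly f a"

definition eval_fun :: "nat \<Rightarrow> (nat \<Rightarrow> 'a::field poly) \<Rightarrow> 'a \<Rightarrow> 'a \<Rightarrow> 'a" where
  "eval_fun d hs a b = (\<Sum>i<d. poly (hs i) a * b ^ i)"

text \<open>Pole order at O of sum a_i(x) y^i: ord_O(x) = -d, ord_O(y) = -n, and the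
  values d*deg a_i + n*i (i<d) are pairwise distinct since gcd(n,d)=1.\<close>
definition pole_order :: "nat \<Rightarrow> nat \<Rightarrow> (nat \<Rightarrow> 'a::field poly) \<Rightarrow> nat" where
  "pole_order n d hs = Max {d * degree (hs i) + n * i | i. i < d \<and> hs i \<noteq> 0}"

text \<open>k(Q) - k(O) is a principal divisor, Q = (a,b): there is a nonzero function h
  with poles only at O of order k whose only zero is Q (then div h = k(Q) - k(O)).\<close>
definition multiple_principal :: "'a::field poly \<Rightarrow> nat \<Rightarrow> nat \<Rightarrow> 'a \<Rightarrow> 'a \<Rightarrow> bool" where
  "multiple_principal f d k a b \<longleftrightarrow>
     (\<exists>hs. (\<exists>i<d. hs i \<noteq> 0) \<and> pole_order (degree f) d hs = k \<and>
        (\<forall>x y. on_curve f d x y \<and> eval_fun d hs x y = 0 \<longrightarrow> x = a \<and> y = b))"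

text \<open>The affine point Q=(a,b) of C_{f,d} has order m in the Jacobian, i.e.
  cl((Q)-(O)) has order m.\<close>
definition point_has_order :: "'a::field poly \<Rightarrow> nat \<Rightarrow> nat \<Rightarrow> 'a \<Rightarrow> 'a \<Rightarrow> bool" where
  "point_has_order f d m a b \<longleftrightarrow> on_curve f d a b \<and> 0 < m \<and>
     multiple_principal f d m a b \<and> (\<forall>k. 0 < k \<and> k < m \<longrightarrow> \<not> multiple_principal f d k a b)"

definition reachable :: "'a::field itself \<Rightarrow> nat \<Rightarrow> nat \<Rightarrow> nat \<Rightarrow> bool" where
  "reachable _ n d m \<longleftrightarrow> m > 1 \<and>
     (\<exists>f :: 'a poly. lead_coeff f = 1 \<and> degree f = n \<and> rsquarefree f \<and>
        (\<exists>a b. point_has_order f d m a b))"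

end

theory Submission
  imports Defs "HOL-Library.Multiset"
begin


lemma map_poly_add_gen:
  assumes "f 0 = 0" "\<And>a b. f (a + b) = f a + f b"
  shows "map_poly f (p + q) = map_poly f p + map_poly f q"
  by (intro poly_eqI) (simp add: coeff_map_poly assms)

lemma map_poly_pcomp_mult:
  fixes A B :: "'a::comm_ring_1 poly poly"
  shows "map_poly (\<lambda>p. pcompose p q) (A * B) =
         map_poly (\<lambda>p. pcompose p q) A * map_poly (\<lambda>p. pcompose p q) B"
proof (induction A)
  case 0
  then show ?case by simp
next
  case (pCons a A)
  have h0: "(\<lambda>p. pcompose p q) 0 = 0" by simp
  have ha: "\<And>x y. pcompose (x + y) q = pcompose x q + pcompose y q" by (simp add: pcompose_add)
  have hm: "\<And>x y. pcompose (x * y) q = pcompose x q * pcompose y q" by (simp add: pcompose_mult)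
  show ?case
    by (simp add: map_poly_add_gen[where f="\<lambda>p. pcompose p q", OF h0 ha] map_poly_smult[where f="\<lambda>p. pcompose p q", OF h0 hm] map_poly_pCons[where f="\<lambda>p. pcompose p q", OF h0] pCons.IH
        algebra_simps)
qed

definition psi :: "nat \<Rightarrow> nat \<Rightarrow> 'a::comm_ring_1 poly poly \<Rightarrow> 'a poly" where
  "psi d n A = poly (map_poly (\<lambda>p. pcompose p (monom 1 d)) A) (monom 1 n)"

lemma psi_mult: "psi d n (A * B) = psi d n A * psi d n B"
  by (simp add: psi_def map_poly_pcomp_mult)

lemma psi_add: "psi d n (A + B) = psi d n A + psi d n B"
  by (simp add: psi_def map_poly_add_gen pcompose_add)

lemma psi_1: "psi d n 1 = 1"
  by (simp add: psi_def pcompose_1)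

lemma psi_prod: "psi d n (\<Prod>i\<in>S. F i) = (\<Prod>i\<in>S. psi d n (F i))"
  by (induction S rule: infinite_finite_induct) (auto simp: psi_1 psi_mult)

lemma psi_sum: "psi d n (\<Sum>i\<in>S. F i) = (\<Sum>i\<in>S. psi d n (F i))"
  apply (induction S rule: infinite_finite_induct)
    apply (simp add: psi_def)
   apply (simp add: psi_def)
  by (simp add: psi_add)

lemma psi_monom: "psi d n (monom c i) = pcompose c (monom 1 d) * monom 1 (n * i)"
  by (simp add: psi_def map_poly_monom poly_monom monom_power)

lemma degree_monom_1_pow: "degree (monom (1::'a::idom) d) = d"
  by (simp add: degree_monom_eq)

lemma degree_psi_monom:
  fixes c :: "'a::idom poly"
  assumes "c \<noteq> 0" "d > 0"
  shows "degree (psi d n (monom c i)) = d * degree c + n * i"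
proof -
  have "pcompose c (monom 1 d) \<noteq> 0"
    using assms by (simp add: pcompose_eq_0_iff degree_monom_eq)
  then show ?thesis
    using assms by (simp add: psi_monom degree_mult_eq degree_pcompose degree_monom_eq)
qed

lemma psi_expand: "psi d n A = (\<Sum>i\<le>degree A. psi d n (monom (coeff A i) i))"
proof -
  have "psi d n A = psi d n (\<Sum>i\<le>degree A. monom (coeff A i) i)"
    by (simp add: poly_as_sum_of_monoms)
  then show ?thesis by (simp add: psi_sum)
qed

lemma degree_sum_unique_max:
  fixes g :: "nat \<Rightarrow> 'a::comm_ring_1 poly"
  assumes "finite I" "i0 \<in> I" "g i0 \<noteq> 0"
    and "\<And>i. i \<in> I \<Longrightarrow> i \<noteq> i0 \<Longrightarrow> g i = 0 \<or> degree (g i) < degree (g i0)"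
  shows "degree (sum g I) = degree (g i0)"
proof -
  have split: "sum g I = g i0 + sum g (I - {i0})"
    using assms by (simp add: sum.remove)
  show ?thesis
  proof (cases "sum g (I - {i0}) = 0")
    case True then show ?thesis using split by simp
  next
    case False
    have "degree (sum g (I - {i0})) < degree (g i0)"
    proof (cases "degree (g i0) = 0")
      case True
      then have "\<And>i. i \<in> I - {i0} \<Longrightarrow> g i = 0" using assms(4) by auto
      then have "sum g (I - {i0}) = 0" by simp
      with False show ?thesis by simp
    next
      case F: False
      show ?thesis
        apply (rule degree_sum_less)
        using assms(4) F by fastforce+
    qed
    then show ?thesis using split by (simp add: degree_add_eq_left)
  qed
qed



definition wb :: "nat \<Rightarrow> nat \<Rightarrow> 'a::zero poly poly \<Rightarrow> nat \<Rightarrow> bool" where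
  "wb d n A B \<longleftrightarrow> (\<forall>i. coeff A i \<noteq> 0 \<longrightarrow> d * degree (coeff A i) + n * i \<le> B)"

lemma wb_1: "wb d n (1::'a::comm_semiring_1 poly poly) 0"
  by (auto simp: wb_def coeff_1 split: if_splits)

lemma wb_mult:
  fixes A B :: "'a::idom poly poly"
  assumes "d > 0" "wb d n A a" "wb d n B b"
  shows "wb d n (A * B) (a + b)"
  unfolding wb_def
proof (intro allI impI)
  fix i assume nz: "coeff (A * B) i \<noteq> 0"
  have c: "coeff (A * B) i = (\<Sum>j\<le>i. coeff A j * coeff B (i - j))" by (rule coeff_mult)
  obtain j0 where j0: "j0 \<le> i" "coeff A j0 * coeff B (i - j0) \<noteq> 0"
  proof (rule ccontr)
    assume "\<not> thesis"
    with that have "\<And>j. j \<le> i \<Longrightarrow> coeff A j * coeff B (i - j) = 0" by blast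
    then have "coeff (A * B) i = 0" unfolding c by (intro sum.neutral) auto
    with nz show False by simp
  qed
  have "n * j0 \<le> a" using assms(2) j0(2) unfolding wb_def by fastforce
  moreover have "n * (i - j0) \<le> b" using assms(3) j0(2) unfolding wb_def by fastforce
  moreover have "n * j0 + n * (i - j0) = n * i" using j0(1)
    by (metis add_mult_distrib2 le_add_diff_inverse)
  ultimately have ni: "n * i \<le> a + b" by linarith
  define D where "D = (a + b - n * i) div d"
  have "degree (coeff (A * B) i) \<le> D"
    unfolding c
  proof (rule degree_sum_le)
    fix j assume j: "j \<in> {..i}"
    show "degree (coeff A j * coeff B (i - j)) \<le> D"
    proof (cases "coeff A j * coeff B (i - j) = 0")
      case True then show ?thesis by (simp only: degree_0)
    next
      case False
      then have nA: "coeff A j \<noteq> 0" and nB: "coeff B (i - j) \<noteq> 0" by auto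
      have wa: "d * degree (coeff A j) + n * j \<le> a" using assms(2) nA unfolding wb_def by blast
      have wbb: "d * degree (coeff B (i - j)) + n * (i - j) \<le> b" using assms(3) nB unfolding wb_def by blast
      have "n * j + n * (i - j) = n * i" using j
        by (metis add_mult_distrib2 atMost_iff le_add_diff_inverse)
      then have "d * (degree (coeff A j) + degree (coeff B (i - j))) \<le> a + b - n * i"
        using wa wbb by (simp add: add_mult_distrib2)
      then have "degree (coeff A j) + degree (coeff B (i - j)) \<le> D"
        unfolding D_def using assms(1) by (metis div_le_mono nonzero_mult_div_cancel_left not_gr0)
      then show ?thesis using degree_mult_le order_trans by blast
    qed
  qed simp
  then have "d * degree (coeff (A * B) i) \<le> d * D" by simp
  also have "d * D \<le> a + b - n * i" unfolding D_def by simp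
  finally show "d * degree (coeff (A * B) i) + n * i \<le> a + b" using ni by linarith
qed

lemma wb_prod:
  fixes F :: "'b \<Rightarrow> 'a::idom poly poly"
  assumes "d > 0" "finite S" "\<And>u. u \<in> S \<Longrightarrow> wb d n (F u) k"
  shows "wb d n (\<Prod>u\<in>S. F u) (card S * k)"
  using assms(2,3)
proof (induction S rule: finite_induct)
  case empty
  then show ?case by (simp add: wb_1)
next
  case (insert x F')
  then have "wb d n (F x * prod F F') (k + card F' * k)"
    using wb_mult[OF assms(1)] by blast
  then show ?case using insert by (simp add: add.commute)
qed

lemma weight_distinct:
  fixes a b i j n d :: nat
  assumes "coprime n d" "i < d" "j < d" "d * a + n * i = d * b + n * j"
  shows "i = j"
proof (rule ccontr)
  assume ne: "i \<noteq> j"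
  have key: "\<And>i j a b. coprime n d \<Longrightarrow> i < j \<Longrightarrow> j < d \<Longrightarrow> d * a + n * i = d * b + n * j \<Longrightarrow> False"
  proof -
    fix i j a b assume cp: "coprime n d" and ij: "i < j" and jd: "j < d" and eq: "d * a + n * i = d * b + n * j"
    have "d * a = d * b + n * (j - i)" using eq ij
      by (simp add: diff_mult_distrib2)
    then have "d dvd n * (j - i)"
      by (metis dvd_add_right_iff dvd_triv_left)
    then have "d dvd (j - i)" using cp
      using coprime_commute coprime_dvd_mult_right_iff by blast
    moreover have "0 < j - i" "j - i < d" using ij jd by auto
    ultimately show False using nat_dvd_not_less by blast
  qed
  show False
  proof (cases "i < j")
    case True then show ?thesis using key assms by blast
  next
    case False then have "j < i" using ne by simp
    then show ?thesis using key[of j i b a] assms by simp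
  qed
qed

lemma psi_monom_nz:
  fixes c :: "'a::idom poly"
  assumes "c \<noteq> 0" "d > 0"
  shows "psi d n (monom c i) \<noteq> 0"
proof -
  have "pcompose c (monom 1 d) \<noteq> 0"
    using assms by (simp add: pcompose_eq_0_iff degree_monom_eq)
  then show ?thesis by (simp add: psi_monom)
qed

definition wset :: "nat \<Rightarrow> nat \<Rightarrow> 'a::zero poly poly \<Rightarrow> nat set" where
  "wset d n A = {d * degree (coeff A i) + n * i | i. coeff A i \<noteq> 0}"

lemma wset_finite: "finite (wset d n A)"
proof -
  have "wset d n A \<subseteq> (\<lambda>i. d * degree (coeff A i) + n * i) ` {..degree A}"
    unfolding wset_def using le_degree by fastforce
  then show ?thesis using finite_subset by blast
qed

lemma psi_degree_small:
  fixes A :: "'a::idom poly poly"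
  assumes "d > 0" "coprime n d" "degree A < d" "A \<noteq> 0"
  shows "degree (psi d n A) = Max (wset d n A)" "wb d n A (Max (wset d n A))"
proof -
  have ne: "wset d n A \<noteq> {}" using assms(4) unfolding wset_def
    by (metis (mono_tags, lifting) empty_Collect_eq leading_coeff_0_iff)
  obtain i0 where i0: "coeff A i0 \<noteq> 0" "d * degree (coeff A i0) + n * i0 = Max (wset d n A)"
    using Max_in[OF wset_finite ne] unfolding wset_def by auto
  have le: "\<And>i. coeff A i \<noteq> 0 \<Longrightarrow> d * degree (coeff A i) + n * i \<le> Max (wset d n A)"
    using wset_finite unfolding wset_def by (intro Max_ge) auto
  then show "wb d n A (Max (wset d n A))" unfolding wb_def by blast
  have lt: "d * degree (coeff A i) + n * i < Max (wset d n A)" if "coeff A i \<noteq> 0" "i \<noteq> i0" for i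
  proof -
    have "i \<le> degree A" "i0 \<le> degree A" using that i0 le_degree by blast+
    then have "i < d" "i0 < d" using assms(3) by auto
    then have "d * degree (coeff A i) + n * i \<noteq> d * degree (coeff A i0) + n * i0"
      using weight_distinct[OF assms(2)] that(2) by blast
    then show ?thesis using le[OF that(1)] i0(2) by linarith
  qed
  have i0d: "i0 \<le> degree A" using i0 le_degree by blast
  have "degree (psi d n A) = degree (psi d n (monom (coeff A i0) i0))"
    unfolding psi_expand[of d n A]
  proof (rule degree_sum_unique_max)
    show "psi d n (monom (coeff A i0) i0) \<noteq> 0"
      using psi_monom_nz[OF i0(1) assms(1)] .
  next
    fix i assume "i \<in> {..degree A}" "i \<noteq> i0"
    then show "psi d n (monom (coeff A i) i) = 0 \<or>
          degree (psi d n (monom (coeff A i) i)) < degree (psi d n (monom (coeff A i0) i0))"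
    proof (cases "coeff A i = 0")
      case True then show ?thesis by (simp add: psi_def)
    next
      case False
      then show ?thesis
        using lt[OF False] degree_psi_monom[OF False assms(1)] degree_psi_monom[OF i0(1) assms(1)] i0(2) \<open>i \<noteq> i0\<close>
        by simp
    qed
  qed (use i0d in auto)
  then show "degree (psi d n A) = Max (wset d n A)"
    using degree_psi_monom[OF i0(1) assms(1)] i0(2) by simp
qed



lemma infinite_alg_closed: "infinite (UNIV :: 'a::alg_closed_field set)"
proof
  assume fin: "finite (UNIV :: 'a set)"
  define P :: "'a poly" where "P = (\<Prod>a\<in>UNIV. [:-a, 1:])"
  have "degree P = (\<Sum>a\<in>(UNIV::'a set). 1)"
    unfolding P_def by (subst degree_prod_sum_eq) auto
  then have dP: "degree P = card (UNIV :: 'a set)" by simp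
  have "card (UNIV :: 'a set) > 0" using fin by (simp add: card_gt_0_iff)
  then have "degree (P + 1) = degree P" using dP by (intro degree_add_eq_left) simp
  then have "degree (P + 1) > 0" using dP \<open>card (UNIV :: 'a set) > 0\<close> by simp
  then obtain x where "poly (P + 1) x = 0" using alg_closed_imp_poly_has_root by blast
  moreover have "poly P x = 0" unfolding P_def poly_prod
    by (rule prod_zero) (use fin in auto)
  ultimately show False by simp
qed

lemma double_root_pderiv:
  fixes p :: "'a::idom poly"
  assumes "[:-a, 1:] ^ 2 dvd p"
  shows "poly (pderiv p) a = 0"
proof -
  obtain q where q: "p = [:-a, 1:] ^ 2 * q" using assms by (elim dvdE)
  have "pderiv p = [:-a, 1:] * ([:-a, 1:] * pderiv q + pderiv [:-a, 1:] * q) + pderiv [:-a, 1:] * ([:-a, 1:] * q)"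
    unfolding q power2_eq_square mult.assoc by (simp only: pderiv_mult) (simp add: algebra_simps)
  then show ?thesis by simp
qed

lemma rsquarefreeI':
  fixes p :: "'a::idom poly"
  assumes "p \<noteq> 0" "\<And>a. poly p a = 0 \<Longrightarrow> poly (pderiv p) a \<noteq> 0"
  shows "rsquarefree p"
  unfolding rsquarefree_def
proof (intro conjI allI assms(1))
  fix a
  show "order a p = 0 \<or> order a p = 1"
  proof (rule ccontr)
    assume "\<not> (order a p = 0 \<or> order a p = 1)"
    then have "2 \<le> order a p" by auto
    then have dv: "[:-a, 1:] ^ 2 dvd p" using order_divides by blast
    then have "poly p a = 0"
      by (metis dvd_trans poly_eq_0_iff_dvd dvd_power[of 2 "[:-a,1:]"] zero_less_numeral)
    then show False using assms(2) double_root_pderiv[OF dv] by blast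
  qed
qed

lemma card_unity_ge:
  assumes "d > 0" "\<not> CHAR('a::alg_closed_field) dvd d"
  shows "finite {z::'a. z ^ d = 1} \<and> d \<le> card {z::'a. z ^ d = 1}"
proof -
  define p :: "'a poly" where "p = monom 1 d - 1"
  have dp: "degree p = d" using assms(1) unfolding p_def
  proof -
    have "degree (monom (1::'a) d + (- 1)) = degree (monom (1::'a) d)"
      using assms(1) by (intro degree_add_eq_left) (simp add: degree_monom_eq)
    then show "degree (monom 1 d - (1::'a poly)) = d" by (simp add: degree_monom_eq)
  qed
  then have p0: "p \<noteq> 0" using assms(1) by auto
  have lp: "lead_coeff p = 1" using assms(1) dp unfolding p_def by (simp add: coeff_1)
  have roots: "{z. z ^ d = 1} = {z. poly p z = 0}" by (auto simp: p_def poly_monom)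
  have fin: "finite {z::'a. z ^ d = 1}" unfolding roots using poly_roots_finite[OF p0] .
  obtain A where A: "size A = degree p" "p = smult (lead_coeff p) (\<Prod>x\<in>#A. [:-x, 1:])"
    using alg_closed_imp_factorization[OF p0] by blast
  have pA: "p = (\<Prod>x\<in>#A. [:-x, 1:])" using A(2) lp by simp
  have dn: "of_nat d \<noteq> (0::'a)" using assms(2) of_nat_eq_0_iff_char_dvd by blast
  have cnt: "count A x \<le> 1" for x
  proof (rule ccontr)
    assume "\<not> count A x \<le> 1"
    then have "0 < count A x" by linarith
    then have "x \<in># A" by simp
    then obtain B where B: "A = add_mset x B" using multi_member_split[of x A] by blast
    have "count A x = Suc (count B x)" using B by simp
    then have "count B x \<ge> 1" using \<open>\<not> count A x \<le> 1\<close> by linarith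
    then have "0 < count B x" by linarith
    then have "x \<in># B" by simp
    then obtain C where C: "B = add_mset x C" using multi_member_split[of x B] by blast
    have "p = [:-x, 1:] ^ 2 * (\<Prod>y\<in>#C. [:-y, 1:])" unfolding pA B C
      by (simp only: prod_mset.add_mset image_mset_add_mset power2_eq_square mult.assoc)
    then have dv: "[:-x, 1:] ^ 2 dvd p" by (metis dvd_triv_left)
    then have "poly (pderiv p) x = 0" by (rule double_root_pderiv)
    moreover have "poly p x = 0"
      using dv by (metis dvd_trans poly_eq_0_iff_dvd dvd_power[of 2 "[:-x,1:]"] zero_less_numeral)
    have pd: "pderiv p = monom (of_nat d) (d - 1)" by (simp add: p_def pderiv_diff pderiv_monom)
    have e1: "of_nat d * x ^ (d - 1) = 0" using \<open>poly (pderiv p) x = 0\<close> unfolding pd by (simp add: poly_monom)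
    have e2: "x ^ d = 1" using \<open>poly p x = 0\<close> unfolding p_def by (simp add: poly_monom)
    show False
    proof (cases "x = 0")
      case True then show False using e2 assms(1) by (simp add: zero_power)
    next
      case False then show False using e1 dn by simp
    qed
  qed
  have "size A = (\<Sum>x\<in>set_mset A. count A x)" by (rule size_multiset_overloaded_eq)
  also have "\<dots> = (\<Sum>x\<in>set_mset A. 1)"
  proof (rule sum.cong)
    fix x assume "x \<in> set_mset A"
    then have "0 < count A x" by simp
    then show "count A x = 1" using cnt[of x] by linarith
  qed simp
  finally have "size A = card (set_mset A)" by simp
  moreover have "set_mset A \<subseteq> {z. z ^ d = 1}"
  proof
    fix x assume "x \<in> set_mset A"
    have "poly p x = (\<Prod>y\<in>#A. poly [:-y, 1:] x)" unfolding pA by (rule poly_prod_mset)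
    also have "\<dots> = 0" using \<open>x \<in> set_mset A\<close> by (force simp: image_iff)
    finally have "poly p x = 0" .
    then show "x \<in> {z. z ^ d = 1}" by (subst roots) simp
  qed
  ultimately have "d \<le> card {z::'a. z ^ d = 1}" using A(1) dp card_mono[OF fin] by simp
  with fin show ?thesis by blast
qed

lemma eval2: "poly (poly A g) x = poly (poly A [:poly g x:]) x"
  by (induction A) auto

definition Phi :: "nat \<Rightarrow> (nat \<Rightarrow> 'a::comm_ring_1 poly) \<Rightarrow> 'a poly poly" where
  "Phi d hs = (\<Sum>i<d. monom (hs i) i)"

lemma coeff_Phi: "coeff (Phi d hs) i = (if i < d then hs i else 0)"
  by (simp add: Phi_def coeff_sum coeff_monom)

lemma degree_Phi: "d > 0 \<Longrightarrow> degree (Phi d hs) < d"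
proof -
  assume "d > 0"
  have "degree (Phi d hs) \<le> d - 1"
    by (rule degree_le) (auto simp: coeff_Phi)
  then show ?thesis using \<open>d > 0\<close> by linarith
qed

lemma Phi_nz: "(\<exists>i<d. hs i \<noteq> 0) \<Longrightarrow> Phi d hs \<noteq> 0"
  by (metis coeff_Phi coeff_0)

lemma eval_Phi: "poly (poly (Phi d hs) [:z:]) x = eval_fun d hs x z"
  by (simp add: Phi_def eval_fun_def poly_sum poly_monom poly_const_pow mult.commute)

lemma pole_order_wset: "pole_order n d hs = Max (wset d n (Phi d hs))"
proof -
  have "wset d n (Phi d hs) = {d * degree (hs i) + n * i | i. i < d \<and> hs i \<noteq> 0}"
    unfolding wset_def coeff_Phi by (auto split: if_splits)
  then show ?thesis unfolding pole_order_def by simp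
qed

definition Phiu :: "nat \<Rightarrow> (nat \<Rightarrow> 'a::comm_ring_1 poly) \<Rightarrow> 'a \<Rightarrow> 'a poly poly" where
  "Phiu d hs u = pcompose (Phi d hs) [:0, [:u:]:]"

lemma coeff_Phiu: "coeff (Phiu d hs u) i = smult (u ^ i) (coeff (Phi d hs) i)"
  by (simp add: Phiu_def coeff_pcompose_linear poly_const_pow)

lemma eval_Phiu: "poly (poly (Phiu d hs u) [:z:]) x = eval_fun d hs x (u * z)"
  by (simp add: Phiu_def poly_pcompose eval_Phi[symmetric])

lemma Phiu_1: "Phiu d hs 1 = Phi d hs"
  by (metis Phiu_def one_pCons pcompose_idR)

lemma wset_Phiu: "(u::'a::field) \<noteq> 0 \<Longrightarrow> wset d n (Phiu d hs u) = wset d n (Phi d hs)"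
  by (simp add: wset_def coeff_Phiu)

lemma degree_Phiu: "(u::'a::field) \<noteq> 0 \<Longrightarrow> degree (Phiu d hs u) = degree (Phi d hs)"
  by (simp add: Phiu_def degree_pcompose)

lemma Phiu_nz: "(u::'a::field) \<noteq> 0 \<Longrightarrow> Phi d hs \<noteq> 0 \<Longrightarrow> Phiu d hs u \<noteq> 0"
proof -
  assume u: "u \<noteq> 0" and P: "Phi d hs \<noteq> 0"
  have "coeff (Phiu d hs u) (degree (Phi d hs)) \<noteq> 0"
    using u P by (simp add: coeff_Phiu)
  then show ?thesis by auto
qed



lemma dvd_power_diff: "(x - y) dvd (x ^ t - y ^ (t::nat))" for x y :: "'a::comm_ring_1"
proof (cases t)
  case 0 then show ?thesis by simp
next
  case (Suc s) then show ?thesis by (simp only: diff_power_eq_sum) simp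
qed

lemma pcompose_power': "pcompose (p ^ t) q = (pcompose p q) ^ t"
  for p q :: "'a::comm_ring_1 poly"
  by (induction t) (simp_all add: pcompose_1 pcompose_mult)

lemma degree_unity_poly: "r > 0 \<Longrightarrow> degree (monom 1 r - 1 :: 'a::comm_ring_1 poly) = r"
proof -
  assume r: "r > 0"
  have "degree (monom (1::'a) r + (- 1)) = degree (monom (1::'a) r)"
    using r by (intro degree_add_eq_left) (simp add: degree_monom_eq)
  then show ?thesis by (simp add: degree_monom_eq)
qed

lemma card_unity_le: "r > 0 \<Longrightarrow> card {z::'a::idom. z ^ r = 1} \<le> r"
proof -
  assume r: "r > 0"
  have "monom 1 r - 1 \<noteq> (0::'a poly)" using degree_unity_poly[OF r, where 'a='a] r by auto
  from card_poly_roots_bound[OF this] have "card {z::'a. poly (monom 1 r - 1) z = 0} \<le> r"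
    using degree_unity_poly[OF r, where 'a='a] by simp
  moreover have "{z::'a. poly (monom 1 r - 1) z = 0} = {z. z ^ r = 1}" by (auto simp: poly_monom)
  ultimately show ?thesis by simp
qed

lemma finite_unity: "r > 0 \<Longrightarrow> finite {z::'a::idom. z ^ r = 1}"
proof -
  assume r: "r > 0"
  have "monom 1 r - 1 \<noteq> (0::'a poly)" using degree_unity_poly[OF r, where 'a='a] r by auto
  from poly_roots_finite[OF this] show ?thesis by (simp add: poly_monom)
qed

lemma poly_dvd_coeffs:
  fixes A :: "'b::comm_semiring_1 poly"
  assumes "\<And>i. coeff A i \<noteq> 0 \<Longrightarrow> d dvd i" "d > 0" "degree A \<le> D"
  shows "poly A y = (\<Sum>t\<le>D. coeff A (d * t) * (y ^ d) ^ t)"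
proof -
  define g where "g i = coeff A i * y ^ i" for i
  have "poly A y = (\<Sum>i\<le>D. g i)"
    unfolding g_def poly_altdef
    by (rule sum.mono_neutral_left) (auto simp: coeff_eq_0 assms(3))
  also have "\<dots> = (\<Sum>i\<in>(\<lambda>t. d * t) ` {..D}. g i)"
  proof (rule sum.mono_neutral_cong)
    fix i assume "i \<in> (\<lambda>t. d * t) ` {..D} - {..D}"
    then show "g i = 0" using assms(3) by (auto simp: g_def coeff_eq_0)
  next
    fix i assume i: "i \<in> {..D} - (\<lambda>t. d * t) ` {..D}"
    show "g i = 0"
    proof (rule ccontr)
      assume "g i \<noteq> 0"
      then have "coeff A i \<noteq> 0" by (auto simp: g_def)
      then obtain t where t: "i = d * t" using assms(1) by (auto elim: dvdE)
      then have "t \<le> i" using assms(2) by simp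
      then have "t \<le> D" using i by auto
      then show False using i t by auto
    qed
  qed auto
  also have "\<dots> = (\<Sum>t\<le>D. g (d * t))"
    using assms(2) by (subst sum.reindex) (auto simp: inj_on_def)
  finally show ?thesis by (simp add: g_def power_mult)
qed

lemma pcompose_lin_lin: "pcompose [:0, [:u:]:] [:0, [:z:]:] = [:0, [:u * z :: 'a::comm_ring_1:]:]"
  by (simp add: pcompose_pCons)

lemma Phiu_pcompose: "pcompose (Phiu d hs u) [:0, [:z:]:] = Phiu d hs (u * z)"
  by (simp add: Phiu_def pcompose_assoc[symmetric] pcompose_lin_lin)



lemma norm_argument:
  fixes f V :: "'a::alg_closed_field poly" and hs :: "nat \<Rightarrow> 'a poly" and b :: 'a
  assumes d2: "d \<ge> 2" and cop: "coprime n d" and chd: "\<not> CHAR('a) dvd d"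
    and monf: "lead_coeff f = 1" and degf: "degree f = n" and n0: "n > 0"
    and b0: "b \<noteq> 0" and Vb: "poly V 0 = b" and Vdvd: "[:0, 1:] ^ m dvd (V ^ d - f)"
    and hnz: "\<exists>i<d. hs i \<noteq> 0" and po: "pole_order n d hs = k" and k0: "0 < k" and km: "k < m"
    and zeros: "\<forall>x y. on_curve f d x y \<and> eval_fun d hs x y = 0 \<longrightarrow> x = 0 \<and> y = b"
  shows "[:0, 1:] ^ k dvd poly (Phi d hs) V"
proof -
  have d0: "d > 0" using d2 by simp
  define U where "U = {z::'a. z ^ d = 1}"
  have finU: "finite U" and cardU: "d \<le> card U"
    using card_unity_ge[OF d0 chd] unfolding U_def by auto
  have U0: "0 \<notin> U" using d0 by (simp add: U_def zero_power)
  have U1: "1 \<in> U" by (simp add: U_def)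
  define \<Phi> where "\<Phi> = Phi d hs"
  have \<Phi>0: "\<Phi> \<noteq> 0" unfolding \<Phi>_def using Phi_nz[OF hnz] .
  have degPhi: "degree \<Phi> < d" unfolding \<Phi>_def using degree_Phi[OF d0] .
  have kW: "Max (wset d n \<Phi>) = k" using po pole_order_wset unfolding \<Phi>_def by metis
  have Pu: "Phiu d hs u \<noteq> 0 \<and> degree (psi d n (Phiu d hs u)) = k \<and> wb d n (Phiu d hs u) k"
    if "u \<in> U" for u
  proof -
    have u0: "u \<noteq> 0" using that U0 by auto
    have nz: "Phiu d hs u \<noteq> 0" using Phiu_nz[OF u0] \<Phi>0 unfolding \<Phi>_def by blast
    have dg: "degree (Phiu d hs u) < d" using degree_Phiu[OF u0] degPhi unfolding \<Phi>_def by simp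
    have ws: "wset d n (Phiu d hs u) = wset d n \<Phi>" using wset_Phiu[OF u0] unfolding \<Phi>_def by simp
    show ?thesis using psi_degree_small[OF d0 cop dg nz] nz ws kW by simp
  qed
  define N where "N = (\<Prod>u\<in>U. Phiu d hs u)"
  define W where "W = card U * k"
  have W0: "W > 0" using cardU d0 k0 unfolding W_def by simp
  have wbN: "wb d n N W" unfolding N_def W_def using wb_prod[OF d0 finU] Pu by blast
  have psiN: "degree (psi d n N) = W"
  proof -
    have "psi d n N = (\<Prod>u\<in>U. psi d n (Phiu d hs u))" unfolding N_def by (rule psi_prod)
    moreover have "\<And>u. u \<in> U \<Longrightarrow> psi d n (Phiu d hs u) \<noteq> 0"
      using Pu k0 by (metis degree_0 less_irrefl)
    ultimately have "degree (psi d n N) = (\<Sum>u\<in>U. degree (psi d n (Phiu d hs u)))"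
      by (simp add: degree_prod_sum_eq)
    also have "\<dots> = (\<Sum>u\<in>U. k)" using Pu by simp
    finally show ?thesis unfolding W_def by simp
  qed
  have inv: "pcompose N [:0, [:z:]:] = N" if z: "z \<in> U" for z
  proof -
    have z0: "z \<noteq> 0" using z U0 by auto
    have "pcompose N [:0, [:z:]:] = (\<Prod>u\<in>U. Phiu d hs (u * z))"
      unfolding N_def pcompose_prod Phiu_pcompose ..
    also have "\<dots> = (\<Prod>u\<in>U. Phiu d hs u)"
    proof (rule prod.reindex_bij_betw)
      show "bij_betw (\<lambda>u. u * z) U U"
      proof (rule bij_betwI')
        show "\<And>x y. x \<in> U \<Longrightarrow> y \<in> U \<Longrightarrow> (x * z = y * z) = (x = y)" using z0 by simp
        show "\<And>x. x \<in> U \<Longrightarrow> x * z \<in> U" using z by (simp add: U_def power_mult_distrib)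
        show "\<And>y. y \<in> U \<Longrightarrow> \<exists>x\<in>U. y = x * z"
        proof -
          fix y assume y: "y \<in> U"
          have "(y / z) ^ d = 1" using y z z0 by (simp add: U_def power_divide)
          then show "\<exists>x\<in>U. y = x * z" using z0 by (intro bexI[of _ "y / z"]) (auto simp: U_def)
        qed
      qed
    qed
    finally show ?thesis unfolding N_def .
  qed
  have dvdcoeff: "d dvd i" if nz: "coeff N i \<noteq> 0" for i
  proof -
    have allz: "z ^ i = 1" if z: "z \<in> U" for z
    proof -
      have "coeff N i = coeff (pcompose N [:0, [:z:]:]) i" using inv[OF z] by simp
      also have "\<dots> = smult (z ^ i) (coeff N i)" by (simp add: coeff_pcompose_linear poly_const_pow)
      finally have e: "coeff N i = smult (z ^ i) (coeff N i)" .
      have "smult (z ^ i - 1) (coeff N i) = smult (z ^ i) (coeff N i) - coeff N i"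
        by (simp add: smult_diff_left)
      also have "\<dots> = 0" by (simp only: e[symmetric] diff_self)
      finally show ?thesis using nz by simp
    qed
    show ?thesis
    proof (rule ccontr)
      assume nd: "\<not> d dvd i"
      define r where "r = i mod d"
      have r0: "r > 0" "r < d" using nd d0 unfolding r_def by (auto simp: dvd_eq_mod_eq_0)
      have "U \<subseteq> {z. z ^ r = 1}"
      proof
        fix z assume z: "z \<in> U"
        have "z ^ i = (z ^ d) ^ (i div d) * z ^ r"
        proof -
          have ie: "i = d * (i div d) + r" unfolding r_def by simp
          have "z ^ i = z ^ (d * (i div d)) * z ^ r" by (subst ie) (simp only: power_add)
          then show ?thesis by (simp only: power_mult)
        qed
        then show "z \<in> {z. z ^ r = 1}" using allz[OF z] z by (simp add: U_def)
      qed
      then have "card U \<le> card {z::'a. z ^ r = 1}"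
        using card_mono finite_unity[OF r0(1)] by blast
      also have "\<dots> \<le> r" by (rule card_unity_le[OF r0(1)])
      finally show False using cardU r0 by simp
    qed
  qed
  define D where "D = degree N"
  define c where "c t = coeff N (d * t)" for t
  define R where "R = (\<Sum>t\<le>D. c t * f ^ t)"
  have polyN: "poly N y = (\<Sum>t\<le>D. c t * (y ^ d) ^ t)" for y :: "'a poly"
    unfolding c_def D_def by (rule poly_dvd_coeffs) (simp_all add: dvdcoeff d0)
  have prodN: "poly (poly N [:y0:]) x0 = (\<Prod>u\<in>U. eval_fun d hs x0 (u * y0))" for x0 y0
    unfolding N_def by (simp add: poly_prod eval_Phiu)
  have evalR: "poly R x0 = poly (poly N [:y0:]) x0" if y0: "y0 ^ d = poly f x0" for x0 y0
  proof -
    have "poly (poly N [:y0:]) x0 = (\<Sum>t\<le>D. poly (c t) x0 * (y0 ^ d) ^ t)"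
      unfolding polyN by (simp add: poly_sum poly_const_pow mult.commute)
    also have "\<dots> = poly R x0" unfolding R_def y0 by (simp add: poly_sum)
    finally show ?thesis by simp
  qed
  have rootsR: "x0 = 0" if r: "poly R x0 = 0" for x0
  proof -
    obtain y0 where y0: "y0 ^ d = poly f x0" using nth_root_exists[OF d0] by blast
    have "(\<Prod>u\<in>U. eval_fun d hs x0 (u * y0)) = 0" using r evalR[OF y0] prodN by simp
    then obtain u where u: "u \<in> U" "eval_fun d hs x0 (u * y0) = 0" using finU by auto
    have "on_curve f d x0 (u * y0)" using u(1) y0 by (simp add: on_curve_def U_def power_mult_distrib)
    then show ?thesis using zeros u(2) by blast
  qed
  define F where "F = pcompose f (monom 1 d)"
  define G where "G = (monom 1 (n * d) :: 'a poly)"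
  have degF: "degree F = n * d" unfolding F_def using degf by (simp add: degree_pcompose degree_monom_eq)
  have lcF: "lead_coeff F = 1" unfolding F_def using monf d0
    by (simp add: lead_coeff_comp degree_monom_eq)
  have psiN_exp: "psi d n N = (\<Sum>t\<le>D. pcompose (c t) (monom 1 d) * G ^ t)"
  proof -
    define A' where "A' = map_poly (\<lambda>p. pcompose p (monom (1::'a) d)) N"
    have cA: "coeff A' i = pcompose (coeff N i) (monom 1 d)" for i
      unfolding A'_def by (simp add: coeff_map_poly)
    have "psi d n N = poly A' (monom 1 n)" unfolding psi_def A'_def ..
    also have "\<dots> = (\<Sum>t\<le>D. coeff A' (d * t) * ((monom 1 n) ^ d) ^ t)"
    proof (rule poly_dvd_coeffs[OF _ d0])
      fix i assume "coeff A' i \<noteq> 0"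
      then have "coeff N i \<noteq> 0" unfolding cA by auto
      then show "d dvd i" by (rule dvdcoeff)
    next
      show "degree A' \<le> D" unfolding A'_def D_def by (rule map_poly_degree_leq)
    qed
    also have "\<dots> = (\<Sum>t\<le>D. pcompose (c t) (monom 1 d) * G ^ t)"
      unfolding cA c_def G_def by (simp add: monom_power mult.commute)
    finally show ?thesis .
  qed
  have Rcomp: "pcompose R (monom 1 d) = (\<Sum>t\<le>D. pcompose (c t) (monom 1 d) * F ^ t)"
    unfolding R_def F_def by (simp add: pcompose_sum pcompose_mult pcompose_power')
  define Df where "Df = (\<Sum>t\<le>D. pcompose (c t) (monom 1 d) * (F ^ t - G ^ t))"
  have Rsplit: "pcompose R (monom 1 d) = psi d n N + Df"
    unfolding Rcomp psiN_exp Df_def by (simp add: right_diff_distrib sum_subtractf)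
  have degDf: "degree Df < W"
    unfolding Df_def
  proof (rule degree_sum_less[OF _ W0])
    fix t assume "t \<in> {..D}"
    show "degree (pcompose (c t) (monom 1 d) * (F ^ t - G ^ t)) < W"
    proof (cases "t = 0 \<or> c t = 0")
      case True then show ?thesis using W0 by auto
    next
      case False
      then have t0: "t > 0" and ct: "c t \<noteq> 0" by auto
      have wct: "d * degree (c t) + n * (d * t) \<le> W"
        using wbN ct unfolding wb_def c_def by blast
      have F0: "F \<noteq> 0" using lcF by auto
      have dFt: "degree (F ^ t) = n * d * t" using degF F0 by (simp add: degree_power_eq)
      have dGt: "degree (G ^ t) = n * d * t" unfolding G_def by (simp add: monom_power degree_monom_eq mult.commute)
      have lFG: "lead_coeff (F ^ t) = lead_coeff (G ^ t)"
        unfolding G_def using lcF by (simp add: lead_coeff_power monom_power degree_monom_eq)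
      have ndt: "n * d * t > 0" using n0 d0 t0 by simp
      have dd: "degree (F ^ t - G ^ t) < n * d * t"
      proof (cases "F ^ t - G ^ t = 0")
        case True then show ?thesis using ndt by simp
      next
        case False
        have le: "degree (F ^ t - G ^ t) \<le> n * d * t" using dFt dGt by (simp add: degree_diff_le)
        have "coeff (F ^ t - G ^ t) (n * d * t) = 0" using lFG dFt dGt by simp
        then have "degree (F ^ t - G ^ t) \<noteq> n * d * t" using False leading_coeff_0_iff by metis
        then show ?thesis using le by simp
      qed
      have "degree (pcompose (c t) (monom 1 d) * (F ^ t - G ^ t))
            \<le> degree (pcompose (c t) (monom (1::'a) d)) + degree (F ^ t - G ^ t)"
        by (rule degree_mult_le)
      also have "degree (pcompose (c t) (monom (1::'a) d)) = d * degree (c t)"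
        by (simp add: degree_pcompose degree_monom_eq)
      finally show ?thesis using dd wct by (simp add: algebra_simps)
    qed
  qed
  have degRc: "degree (pcompose R (monom 1 d)) = W"
    unfolding Rsplit using degDf psiN by (simp add: degree_add_eq_left)
  then have degRW: "degree R * d = W" by (simp add: degree_pcompose degree_monom_eq)
  have R0: "R \<noteq> 0" using degRW W0 by auto
  have kR: "k \<le> degree R"
  proof -
    have "d * k \<le> W" unfolding W_def using cardU by simp
    then have "d * k \<le> d * degree R" using degRW by (simp add: mult.commute)
    then show ?thesis using d0 by simp
  qed
  have Rform: "R = smult (lead_coeff R) ([:0, 1:] ^ degree R)"
  proof -
    obtain A where A: "size A = degree R" "R = smult (lead_coeff R) (\<Prod>x\<in>#A. [:-x, 1:])"
      using alg_closed_imp_factorization[OF R0] by blast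
    have "x = 0" if x: "x \<in># A" for x
    proof (rule rootsR)
      have "poly (\<Prod>x\<in>#A. [:-x, 1:]) x = 0"
        unfolding poly_prod_mset using x by (force simp: image_iff)
      then show "poly R x = 0" by (subst A(2)) simp
    qed
    then have "image_mset (\<lambda>x. [:-x, 1:]) A = image_mset (\<lambda>_. [:0, 1:]) A"
      by (intro image_mset_cong) simp
    then have "(\<Prod>x\<in>#A. [:-x, 1:]) = [:0, 1:] ^ size A" by (simp add: image_mset_const_eq)
    then show ?thesis using A by simp
  qed
  have kdvdR: "[:0, 1:] ^ k dvd R"
  proof -
    have "[:0, 1:] ^ k dvd ([:0, 1:] ^ degree R :: 'a poly)" using kR by (rule le_imp_power_dvd)
    then show ?thesis by (subst Rform) (rule dvd_smult)
  qed
  have diffNV: "poly N V - R = (\<Sum>t\<le>D. c t * ((V ^ d) ^ t - f ^ t))"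
    unfolding polyN R_def by (simp add: right_diff_distrib sum_subtractf)
  have mdvd: "[:0, 1:] ^ m dvd (poly N V - R)"
    unfolding diffNV
  proof (rule dvd_sum)
    fix t assume "t \<in> {..D}"
    have "[:0, 1:] ^ m dvd ((V ^ d) ^ t - f ^ t)"
      using Vdvd dvd_power_diff dvd_trans by blast
    then show "[:0, 1:] ^ m dvd c t * ((V ^ d) ^ t - f ^ t)" by (rule dvd_mult)
  qed
  have kdvdNV: "[:0, 1:] ^ k dvd poly N V"
  proof -
    have "[:0, 1:] ^ k dvd ([:0, 1:] ^ m :: 'a poly)" using km by (intro le_imp_power_dvd) simp
    then have "[:0, 1:] ^ k dvd (poly N V - R)" using mdvd dvd_trans by blast
    then have "[:0, 1:] ^ k dvd (R + (poly N V - R))" using kdvdR by (rule dvd_add[rotated])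
    then show ?thesis by simp
  qed
  define M where "M = (\<Prod>u\<in>U - {1}. Phiu d hs u)"
  have NM: "N = \<Phi> * M" unfolding N_def M_def \<Phi>_def
    using prod.remove[OF finU U1, of "Phiu d hs"] by (simp only: Phiu_1)
  have fb: "poly f 0 = b ^ d"
  proof -
    have "[:0, 1:] dvd ([:0, 1:] ^ m :: 'a poly)" using km k0 by (intro dvd_power) simp_all
    then have "[:- 0, 1:] dvd (V ^ d - f)" using Vdvd dvd_trans by simp
    then have "poly (V ^ d - f) 0 = 0" using poly_eq_0_iff_dvd by blast
    then show ?thesis using Vb by simp
  qed
  have M0: "poly (poly M V) 0 \<noteq> 0"
  proof -
    have "poly (poly M V) 0 = poly (poly M [:b:]) 0" using eval2[of M V 0] Vb by simp
    also have "\<dots> = (\<Prod>u\<in>U - {1}. eval_fun d hs 0 (u * b))"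
      unfolding M_def by (simp add: poly_prod eval_Phiu)
    also have "\<dots> \<noteq> 0"
    proof -
      have "eval_fun d hs 0 (u * b) \<noteq> 0" if u: "u \<in> U - {1}" for u
      proof
        assume e: "eval_fun d hs 0 (u * b) = 0"
        have "on_curve f d 0 (u * b)" using u fb by (simp add: on_curve_def U_def power_mult_distrib)
        then have "u * b = b" using zeros e by blast
        then show False using b0 u by simp
      qed
      then show ?thesis using finU by simp
    qed
    finally show ?thesis .
  qed
  show ?thesis
  proof (cases "poly \<Phi> V = 0")
    case True then show ?thesis unfolding \<Phi>_def by simp
  next
    case False
    have MV0: "poly M V \<noteq> 0" using M0 by auto
    have eq: "poly N V = poly \<Phi> V * poly M V" unfolding NM by simp
    then have nz: "poly \<Phi> V * poly M V \<noteq> 0" using False MV0 by simp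
    have "k \<le> order 0 (poly \<Phi> V * poly M V)"
    proof -
      have "[:0, 1:] ^ k dvd poly \<Phi> V * poly M V" using kdvdNV eq by simp
      then show ?thesis using nz order_divides[of 0 k "poly \<Phi> V * poly M V"] by simp
    qed
    also have "\<dots> = order 0 (poly \<Phi> V)" using order_mult[OF nz] order_0I[OF M0] by simp
    finally have "k \<le> order 0 (poly \<Phi> V)" .
    then show ?thesis using order_divides[of 0 k "poly \<Phi> V"] unfolding \<Phi>_def by simp
  qed
qed



lemma poly_Phi: "poly (Phi d hs) V = (\<Sum>i<d. hs i * V ^ i)"
  by (simp add: Phi_def poly_sum poly_monom)

lemma eval_fun_two:
  assumes "d \<ge> 2" "\<And>i. i \<ge> 2 \<Longrightarrow> hs i = 0"
  shows "eval_fun d hs x y = poly (hs 0) x + poly (hs 1) x * y"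
proof -
  have "eval_fun d hs x y = (\<Sum>i\<in>{0,1}. poly (hs i) x * y ^ i)"
    unfolding eval_fun_def
    by (rule sum.mono_neutral_right) (use assms in auto)
  then show ?thesis by simp
qed

lemma pole_order_two:
  assumes "d \<ge> 2" "\<And>i. i \<ge> 2 \<Longrightarrow> hs i = 0" "hs 0 \<noteq> 0" "hs 1 \<noteq> 0"
  shows "pole_order n d hs = max (d * degree (hs 0)) (d * degree (hs 1) + n)"
proof -
  have "{d * degree (hs i) + n * i | i. i < d \<and> hs i \<noteq> 0} = {d * degree (hs 0), d * degree (hs 1) + n}"
  proof (intro equalityI subsetI)
    fix x assume "x \<in> {d * degree (hs i) + n * i | i. i < d \<and> hs i \<noteq> 0}"
    then obtain i where i: "x = d * degree (hs i) + n * i" "i < d" "hs i \<noteq> 0" by blast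
    have "\<not> 2 \<le> i" using assms(2)[of i] i(3) by blast
    then have "i = 0 \<or> i = 1" by linarith
    then show "x \<in> {d * degree (hs 0), d * degree (hs 1) + n}" using i by auto
  next
    fix x assume "x \<in> {d * degree (hs 0), d * degree (hs 1) + n}"
    then show "x \<in> {d * degree (hs i) + n * i | i. i < d \<and> hs i \<noteq> 0}"
    proof
      assume "x = d * degree (hs 0)"
      then show ?thesis using assms by (intro CollectI exI[of _ 0]) auto
    next
      assume "x \<in> {d * degree (hs 1) + n}"
      then show ?thesis using assms by (intro CollectI exI[of _ 1]) auto
    qed
  qed
  then show ?thesis unfolding pole_order_def by (simp add: max_def)
qed

lemma arith_c1:
  fixes a i k n l d :: nat
  assumes "d \<ge> 2" "d * a + n * i \<le> k" "k > 0" "l < n"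
  shows "a + l * i < k"
proof (cases "i = 0")
  case True
  have "2 * a \<le> d * a" using assms(1) by (rule mult_le_mono1)
  moreover have "d * a \<le> k" using assms(2) True by simp
  ultimately have "2 * a \<le> k" by linarith
  then show ?thesis using True assms(3) by simp
next
  case False
  have ni: "n * i \<le> k" using assms(2) by linarith
  have "d * (l * i) < d * (n * i)" using False assms(1,4) by simp
  have "(d - 1) * (n * i) \<le> (d - 1) * k" using ni by simp
  have e1: "d * (a + l * i) = d * a + d * (l * i)" by (simp add: algebra_simps)
  have e2: "d * (n * i) = n * i + (d - 1) * (n * i)" using assms(1) by (cases d) auto
  have e3: "d * k = k + (d - 1) * k" using assms(1) by (cases d) auto
  have "d * (a + l * i) < d * k"
    using e1 e2 e3 \<open>d * (l * i) < d * (n * i)\<close> \<open>(d - 1) * (n * i) \<le> (d - 1) * k\<close> assms(2) by linarith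
  then show ?thesis by simp
qed



lemma f1_deg_lc:
  fixes r :: "'a::field poly"
  assumes d0: "d > 0" and dr: "degree r < l" and lr: "of_nat d * lead_coeff r = 1"
  defines "v \<equiv> monom 1 l + r"
  shows "degree (v ^ d - monom 1 (d * l)) = degree r + l * (d - 1)"
    and "lead_coeff (v ^ d - monom 1 (d * l)) = 1"
    and "v ^ d - monom 1 (d * l) = r * (\<Sum>p<d. v ^ p * monom 1 l ^ (d - 1 - p))"
proof -
  have r0: "r \<noteq> 0" using lr by auto
  have dn: "of_nat d \<noteq> (0::'a)" using lr by auto
  have dv: "degree v = l" unfolding v_def using dr by (simp add: degree_add_eq_left degree_monom_eq)
  have lv: "lead_coeff v = 1" unfolding v_def using dr dv[unfolded v_def] by (simp add: coeff_eq_0)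
  define X :: "'a poly" where "X = monom 1 l"
  have Xd: "X ^ d = monom 1 (d * l)" unfolding X_def by (simp add: monom_power mult.commute)
  define S where "S = (\<Sum>p<d. v ^ p * X ^ (d - 1 - p))"
  have fS: "v ^ d - monom 1 (d * l) = r * S"
  proof -
    have "v ^ Suc (d - 1) - X ^ Suc (d - 1) = (v - X) * (\<Sum>p<Suc (d - 1). v ^ p * X ^ (d - 1 - p))"
      by (rule diff_power_eq_sum)
    then have "v ^ d - X ^ d = (v - X) * S" unfolding S_def using d0 by simp
    then show ?thesis using Xd by (simp add: v_def X_def)
  qed
  then show "v ^ d - monom 1 (d * l) = r * (\<Sum>p<d. v ^ p * monom 1 l ^ (d - 1 - p))"
    unfolding S_def X_def .
  have v0: "v \<noteq> 0" using lv by auto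
  have X0: "X \<noteq> 0" unfolding X_def by simp
  have trm: "degree (v ^ p * X ^ (d - 1 - p)) = l * (d - 1) \<and> lead_coeff (v ^ p * X ^ (d - 1 - p)) = 1"
    if "p < d" for p
  proof -
    have dX: "degree X = l" unfolding X_def by (simp add: degree_monom_eq)
    have lX: "lead_coeff X = 1" unfolding X_def by (simp add: degree_monom_eq)
    have "degree (v ^ p * X ^ (d - 1 - p)) = p * l + (d - 1 - p) * l"
      using v0 X0 dv dX by (simp add: degree_mult_eq degree_power_eq)
    also have "\<dots> = (p + (d - 1 - p)) * l" by (simp add: add_mult_distrib)
    also have "\<dots> = l * (d - 1)" using that by simp
    finally have dg: "degree (v ^ p * X ^ (d - 1 - p)) = l * (d - 1)" .
    have "lead_coeff (v ^ p * X ^ (d - 1 - p)) = 1" using lv lX by (simp add: lead_coeff_mult lead_coeff_power)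
    with dg show ?thesis by simp
  qed
  have cS: "coeff S (l * (d - 1)) = of_nat d"
  proof -
    have "coeff S (l * (d - 1)) = (\<Sum>p<d. coeff (v ^ p * X ^ (d - 1 - p)) (l * (d - 1)))"
      unfolding S_def by (simp add: coeff_sum)
    also have "\<dots> = (\<Sum>p<d. 1)"
    proof (rule sum.cong)
      fix p assume "p \<in> {..<d}"
      then have pd: "p < d" by simp
      have h1: "degree (v ^ p * X ^ (d - 1 - p)) = l * (d - 1)" using trm[OF pd] by blast
      have h2: "lead_coeff (v ^ p * X ^ (d - 1 - p)) = 1" using trm[OF pd] by blast
      show "coeff (v ^ p * X ^ (d - 1 - p)) (l * (d - 1)) = 1" using h2 unfolding h1 .
    qed simp
    finally show ?thesis by simp
  qed
  have dSle: "degree S \<le> l * (d - 1)"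
    unfolding S_def by (rule degree_sum_le) (use trm in auto)
  have dS: "degree S = l * (d - 1)"
    using dSle cS dn by (metis le_antisym le_degree)
  have lS: "lead_coeff S = of_nat d" using dS cS by simp
  have S0: "S \<noteq> 0" using lS dn by auto
  show "degree (v ^ d - monom 1 (d * l)) = degree r + l * (d - 1)"
    using fS r0 S0 dS by (simp add: degree_mult_eq)
  show "lead_coeff (v ^ d - monom 1 (d * l)) = 1"
    using fS lS lr by (simp add: lead_coeff_mult mult.commute)
qed



lemma construction1:
  fixes r :: "'a::alg_closed_field poly"
  assumes d2: "d \<ge> 2" and cop: "coprime n d" and chd: "\<not> CHAR('a) dvd d"
    and dr: "degree r < l" and lr: "of_nat d * lead_coeff r = 1" and r0: "poly r 0 \<noteq> 0"
    and nl: "n = degree r + l * (d - 1)" and ln: "l < n" and mdl: "m = d * l"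
    and sqf: "rsquarefree ((monom 1 l + r) ^ d - monom 1 (d * l))"
  shows "reachable TYPE('a) n d m"
proof -
  have d0: "d > 0" using d2 by simp
  define v where "v = monom 1 l + r"
  define f where "f = v ^ d - monom 1 (d * l)"
  have degf: "degree f = n" unfolding f_def v_def using f1_deg_lc(1)[OF d0 dr lr] nl by simp
  have lcf: "lead_coeff f = 1" unfolding f_def v_def using f1_deg_lc(2)[OF d0 dr lr] by simp
  have l0: "l > 0" using dr by simp
  have n0: "n > 0" using ln by simp
  have dv: "degree v = l" unfolding v_def using dr by (simp add: degree_add_eq_left degree_monom_eq)
  have v0: "v \<noteq> 0" using dv l0 by auto
  define b where "b = poly r 0"
  have vb: "poly v 0 = b" unfolding v_def b_def using l0 by (simp add: poly_monom zero_power)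
  have mn: "n < m"
  proof -
    have "n < l + l * (d - 1)" using nl dr by simp
    also have "l + l * (d - 1) = m" using mdl d0 by (cases d) (auto simp: algebra_simps)
    finally show ?thesis .
  qed
  have m1: "m > 1" using mn ln by simp
  have fx: "poly f x = poly v x ^ d - x ^ m" for x
    unfolding f_def mdl by (simp add: poly_monom)
  have oc: "on_curve f d 0 b" unfolding on_curve_def fx using vb mn by (simp add: zero_power)
  define hs0 where "hs0 = (\<lambda>i::nat. if i = 0 then v else if i = 1 then -1 else (0::'a poly))"
  have hs0_2: "\<And>i. i \<ge> 2 \<Longrightarrow> hs0 i = 0" unfolding hs0_def by auto
  have mpA: "\<exists>i<d. hs0 i \<noteq> 0" using d0 v0 by (intro exI[of _ 0]) (simp add: hs0_def)
  have mpB: "pole_order (degree f) d hs0 = m"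
  proof -
    have "pole_order (degree f) d hs0 = max (d * degree (hs0 0)) (d * degree (hs0 1) + n)"
      unfolding degf by (rule pole_order_two[OF d2 hs0_2]) (use v0 in \<open>simp_all add: hs0_def\<close>)
    also have "\<dots> = m" using dv mn mdl by (simp add: hs0_def)
    finally show ?thesis .
  qed
  have mpC: "\<forall>x y. on_curve f d x y \<and> eval_fun d hs0 x y = 0 \<longrightarrow> x = 0 \<and> y = b"
  proof (intro allI impI)
    fix x y assume a: "on_curve f d x y \<and> eval_fun d hs0 x y = 0"
    have "eval_fun d hs0 x y = poly v x - y"
      using eval_fun_two[OF d2 hs0_2] by (simp add: hs0_def)
    then have y: "y = poly v x" using a by simp
    then have "x ^ m = 0" using a unfolding on_curve_def fx by simp
    then have "x = 0" by simp
    then show "x = 0 \<and> y = b" using y vb by simp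
  qed
  have mp: "multiple_principal f d m 0 b"
    unfolding multiple_principal_def using mpA mpB mpC by blast
  have minimal: "\<not> multiple_principal f d k 0 b" if k: "0 < k" "k < m" for k
  proof
    assume "multiple_principal f d k 0 b"
    then obtain hs where hnz: "\<exists>i<d. hs i \<noteq> 0" and po: "pole_order n d hs = k"
      and zeros: "\<forall>x y. on_curve f d x y \<and> eval_fun d hs x y = 0 \<longrightarrow> x = 0 \<and> y = b"
      unfolding multiple_principal_def degf by blast
    have Vdvd: "[:0, 1:] ^ m dvd (v ^ d - f)"
      unfolding f_def mdl by (simp add: monom_altdef)
    have b0: "b \<noteq> 0" using r0 b_def by simp
    have kdvd: "[:0, 1:] ^ k dvd poly (Phi d hs) v"
      by (rule norm_argument[OF d2 cop chd lcf degf n0 b0 vb Vdvd hnz po k(1) k(2) zeros])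
    define P where "P = poly (Phi d hs) v"
    have Pexp: "P = (\<Sum>i<d. hs i * v ^ i)" unfolding P_def by (rule poly_Phi)
    have wfin: "finite {d * degree (hs i) + n * i | i. i < d \<and> hs i \<noteq> 0}" by simp
    have wle: "d * degree (hs i) + n * i \<le> k" if "i < d" "hs i \<noteq> 0" for i
      unfolding po[symmetric] pole_order_def using that by (intro Max_ge[OF wfin]) blast
    have degP: "degree P < k" unfolding Pexp
    proof (rule degree_sum_less[OF _ k(1)])
      fix i assume i: "i \<in> {..<d}"
      show "degree (hs i * v ^ i) < k"
      proof (cases "hs i = 0")
        case True then show ?thesis using k by simp
      next
        case False
        have "degree (hs i * v ^ i) = degree (hs i) + l * i"
          using False v0 dv by (simp add: degree_mult_eq degree_power_eq mult.commute)
        also have "\<dots> < k" using arith_c1[OF d2 wle[of i] k(1) ln] i False by simp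
        finally show ?thesis .
      qed
    qed
    have P0: "P = 0"
    proof (rule ccontr)
      assume "P \<noteq> 0"
      then have "k \<le> order 0 P" using kdvd order_divides[of 0 k P] unfolding P_def by simp
      also have "\<dots> \<le> degree P" using \<open>P \<noteq> 0\<close> by (rule order_degree)
      finally show False using degP by simp
    qed
    then have "[:-v, 1:] dvd Phi d hs" unfolding P_def using poly_eq_0_iff_dvd by blast
    then obtain G where G: "Phi d hs = [:-v, 1:] * G" by (elim dvdE)
    have Phi0: "Phi d hs \<noteq> 0" by (rule Phi_nz[OF hnz])
    have dpsi: "degree (psi d n (Phi d hs)) = k"
      using psi_degree_small(1)[OF d0 cop degree_Phi[OF d0] Phi0] po pole_order_wset by metis
    then have psi0: "psi d n (Phi d hs) \<noteq> 0" using k(1) by auto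
    have psiG: "psi d n (Phi d hs) = psi d n [:-v, 1:] * psi d n G" unfolding G by (rule psi_mult)
    then have psiG0: "psi d n G \<noteq> 0" using psi0 by auto
    have lin: "[:-v, 1:] = monom (-v) 0 + monom 1 1" by (simp add: monom_0 monom_Suc)
    have "psi d n [:-v, 1:] = pcompose (-v) (monom 1 d) + monom 1 n"
      unfolding lin psi_add psi_monom by (simp add: pcompose_1)
    moreover have "degree (pcompose (-v) (monom (1::'a) d)) = m"
      using dv mdl by (simp add: degree_pcompose degree_monom_eq mult.commute)
    ultimately have dlin: "degree (psi d n [:-v, 1:]) = m"
      using mn by (simp add: degree_add_eq_left degree_monom_eq)
    then have lin0: "psi d n [:-v, 1:] \<noteq> 0" using mn by auto
    have "degree (psi d n (Phi d hs)) = m + degree (psi d n G)"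
      unfolding psiG using lin0 psiG0 dlin by (simp add: degree_mult_eq)
    then show False using dpsi k(2) by simp
  qed
  have "point_has_order f d m 0 b"
    unfolding point_has_order_def using oc mn mp minimal by auto
  moreover have "rsquarefree f" unfolding f_def v_def using sqf .
  ultimately show ?thesis unfolding reachable_def using m1 lcf degf by blast
qed



lemma sqf_reduce:
  fixes r :: "'a::field poly" and \<alpha> :: 'a
  assumes d0: "d > 0" and l0: "l > 0" and r0: "poly r 0 \<noteq> 0" and dn: "of_nat d \<noteq> (0::'a)"
    and f0: "poly ((monom 1 l + r) ^ d - monom 1 (d * l)) \<alpha> = 0"
    and f1: "poly (pderiv ((monom 1 l + r) ^ d - monom 1 (d * l))) \<alpha> = 0"
  shows "\<alpha> \<noteq> 0 \<and> \<alpha> * poly (pderiv r) \<alpha> = of_nat l * poly r \<alpha> \<and> (poly r \<alpha> + \<alpha> ^ l) ^ d = (\<alpha> ^ l) ^ d"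
proof -
  define A where "A = \<alpha> ^ l + poly r \<alpha>"
  define r' where "r' = poly (pderiv r) \<alpha>"
  have Ad: "A ^ d = (\<alpha> ^ l) ^ d" using f0 unfolding A_def
    by (simp add: poly_monom power_mult[symmetric] mult.commute)
  have D: "of_nat d * A ^ (d - 1) * (of_nat l * \<alpha> ^ (l - 1) + r') = of_nat (d * l) * \<alpha> ^ (d * l - 1)"
    using f1 unfolding A_def r'_def by (simp add: pderiv_diff pderiv_add pderiv_power pderiv_monom poly_monom)
  have a0: "\<alpha> \<noteq> 0"
  proof
    assume "\<alpha> = 0"
    then have "poly r 0 ^ d = 0" using Ad l0 d0 unfolding A_def by (simp add: zero_power)
    then show False using r0 by simp
  qed
  have p1: "\<alpha> * \<alpha> ^ (l - 1) = \<alpha> ^ l" using l0 by (cases l) auto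
  have dl0: "d * l > 0" using d0 l0 by simp
  have p2: "\<alpha> * \<alpha> ^ (d * l - 1) = \<alpha> ^ (d * l)" using dl0 by (cases "d * l") auto
  have p3: "A * A ^ (d - 1) = A ^ d" using d0 by (cases d) auto
  have Z0: "(\<alpha> ^ l) ^ d \<noteq> 0" using a0 by simp
  have Zeq: "(\<alpha> ^ l) ^ d = \<alpha> ^ (d * l)" by (simp only: power_mult[symmetric] mult.commute)
  have "(\<alpha> * A) * (of_nat d * A ^ (d - 1) * (of_nat l * \<alpha> ^ (l - 1) + r')) =
        (\<alpha> * A) * (of_nat (d * l) * \<alpha> ^ (d * l - 1))" using D by simp
  then have "of_nat d * (A * A ^ (d - 1)) * (of_nat l * (\<alpha> * \<alpha> ^ (l - 1)) + \<alpha> * r') =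
        of_nat d * of_nat l * (\<alpha> * \<alpha> ^ (d * l - 1)) * A"
    by (simp add: algebra_simps)
  then have "of_nat d * (\<alpha> ^ l) ^ d * (of_nat l * \<alpha> ^ l + \<alpha> * r') = of_nat d * (\<alpha> ^ l) ^ d * (of_nat l * A)"
    unfolding p1 p2 p3 Ad Zeq by (simp add: algebra_simps)
  then have "of_nat l * \<alpha> ^ l + \<alpha> * r' = of_nat l * A" using dn Z0 a0 l0 d0 by simp
  then have "\<alpha> * r' = of_nat l * poly r \<alpha>" unfolding A_def by (simp add: algebra_simps)
  moreover have "(poly r \<alpha> + \<alpha> ^ l) ^ d = (\<alpha> ^ l) ^ d" using Ad unfolding A_def by (simp add: add.commute)
  ultimately show ?thesis using a0 unfolding r'_def by blast
qed



lemma exists_r1: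
  fixes d l e :: nat
  assumes d2: "d \<ge> 2" and el: "e < l" and chd: "\<not> CHAR('a::alg_closed_field) dvd d"
    and Ll: "of_nat l \<noteq> (0::'a)" and Lle: "of_nat (l - e) \<noteq> (0::'a)"
    and Le: "e > 0 \<Longrightarrow> of_nat e \<noteq> (0::'a)"
  shows "\<exists>r::'a poly. degree r = e \<and> of_nat d * lead_coeff r = 1 \<and> poly r 0 \<noteq> 0 \<and>
            rsquarefree ((monom 1 l + r) ^ d - monom 1 (d * l))"
proof -
  have d0: "d > 0" using d2 by simp
  have l0: "l > 0" using el by simp
  have dn: "of_nat d \<noteq> (0::'a)" using chd of_nat_eq_0_iff_char_dvd by blast
  define s :: 'a where "s = inverse (of_nat d)"
  have s0: "s \<noteq> 0" unfolding s_def using dn by simp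
  have ds: "of_nat d * s = 1" unfolding s_def using dn by simp
  have fnz: "(monom 1 l + r) ^ d - monom 1 (d * l) \<noteq> 0" if "degree r < l" "of_nat d * lead_coeff r = 1" for r :: "'a poly"
    using f1_deg_lc(2)[OF d0 that] by auto
  show ?thesis
  proof (cases "e = 0")
    case True
    define r :: "'a poly" where "r = [:s:]"
    have "rsquarefree ((monom 1 l + r) ^ d - monom 1 (d * l))"
    proof (rule rsquarefreeI')
      show "(monom 1 l + r) ^ d - monom 1 (d * l) \<noteq> 0" using fnz[of r] l0 ds unfolding r_def by simp
    next
      fix a assume "poly ((monom 1 l + r) ^ d - monom 1 (d * l)) a = 0"
      moreover have "poly r 0 \<noteq> 0" unfolding r_def using s0 by simp
      ultimately have "poly (pderiv ((monom 1 l + r) ^ d - monom 1 (d * l))) a = 0 \<Longrightarrow>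
          a * poly (pderiv r) a = of_nat l * poly r a"
        using sqf_reduce[OF d0 l0 _ dn] by blast
      then show "poly (pderiv ((monom 1 l + r) ^ d - monom 1 (d * l))) a \<noteq> 0"
        using Ll s0 unfolding r_def by auto
    qed
    then show ?thesis using True s0 ds unfolding r_def by (intro exI[of _ "[:s:]"]) simp
  next
    case False
    then have e0: "e > 0" by simp
    define E :: 'a where "E = of_nat e"
    define L :: 'a where "L = of_nat l"
    have E0: "E \<noteq> 0" unfolding E_def using Le e0 by simp
    have EL: "E - L \<noteq> 0"
    proof
      assume "E - L = 0"
      then have "of_nat (l - e) = (0::'a)" unfolding E_def L_def using el by (simp add: of_nat_diff)
      then show False using Lle by simp
    qed
    define U where "U = {u::'a. u ^ d = 1}"
    have finU: "finite U" unfolding U_def by (rule finite_unity[OF d0])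
    define k1 where "k1 u = (u - 1) ^ e * (L / ((E - L) * s)) ^ l" for u
    define k2 where "k2 = (E / (E - L)) ^ e"
    have k20: "k2 \<noteq> 0" unfolding k2_def using E0 EL by simp
    define Q where "Q u = monom (k1 u) l - monom k2 e" for u
    have Q0: "Q u \<noteq> 0" for u
    proof
      assume "Q u = 0"
      then have "coeff (Q u) e = 0" by simp
      then show False unfolding Q_def using el k20 by (simp add: coeff_monom)
    qed
    define bad where "bad = (\<Union>u\<in>U. {c. poly (Q u) c = 0}) \<union> {0}"
    have finbad: "finite bad" unfolding bad_def using finU poly_roots_finite[OF Q0] by blast
    obtain c where c: "c \<notin> bad" using ex_new_if_finite[OF infinite_alg_closed finbad] by blast
    have c0: "c \<noteq> 0" using c unfolding bad_def by blast
    have cQ: "poly (Q u) c \<noteq> 0" if "u \<in> U" for u using c that unfolding bad_def by blast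
    define r :: "'a poly" where "r = [:c:] + monom s e"
    have dr: "degree r = e" unfolding r_def using e0 s0 by (simp add: degree_add_eq_right degree_monom_eq)
    have lr: "lead_coeff r = s" using dr unfolding r_def using e0 by (simp add: coeff_pCons split: nat.splits)
    have r0: "poly r 0 = c" unfolding r_def using e0 by (simp add: poly_monom zero_power)
    have pr: "poly r a = c + s * a ^ e" for a unfolding r_def by (simp add: poly_monom)
    have pdr: "a * poly (pderiv r) a = E * s * a ^ e" for a
    proof -
      have "pderiv r = monom (of_nat e * s) (e - 1)" unfolding r_def by (simp add: pderiv_add pderiv_monom)
      then have "a * poly (pderiv r) a = of_nat e * s * (a * a ^ (e - 1))" by (simp add: poly_monom algebra_simps)
      also have "a * a ^ (e - 1) = a ^ e" using e0 by (cases e) auto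
      finally show ?thesis unfolding E_def by simp
    qed
    have "rsquarefree ((monom 1 l + r) ^ d - monom 1 (d * l))"
    proof (rule rsquarefreeI')
      show "(monom 1 l + r) ^ d - monom 1 (d * l) \<noteq> 0" using fnz[of r] dr el lr ds by simp
    next
      fix \<alpha> assume f0: "poly ((monom 1 l + r) ^ d - monom 1 (d * l)) \<alpha> = 0"
      show "poly (pderiv ((monom 1 l + r) ^ d - monom 1 (d * l))) \<alpha> \<noteq> 0"
      proof
        assume f1: "poly (pderiv ((monom 1 l + r) ^ d - monom 1 (d * l))) \<alpha> = 0"
        have rr0: "poly r 0 \<noteq> 0" using r0 c0 by simp
        from sqf_reduce[OF d0 l0 rr0 dn f0 f1]
        have a0: "\<alpha> \<noteq> 0" and eq1: "\<alpha> * poly (pderiv r) \<alpha> = of_nat l * poly r \<alpha>"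
          and eq2: "(poly r \<alpha> + \<alpha> ^ l) ^ d = (\<alpha> ^ l) ^ d" by blast+
        define a where "a = \<alpha> ^ e"
        define B where "B = \<alpha> ^ l"
        have B0: "B \<noteq> 0" unfolding B_def using a0 by simp
        have e1: "E * s * a = L * (c + s * a)" using eq1 unfolding pdr pr a_def L_def .
        have aval: "a = L * c / ((E - L) * s)"
        proof -
          have "(E - L) * s * a = L * c" using e1 by (simp add: algebra_simps)
          then show ?thesis using EL s0 by (simp add: field_simps)
        qed
        have rval: "c + s * a = c * E / (E - L)"
          unfolding aval using EL s0 by (simp add: field_simps)
        define u where "u = (c + s * a + B) / B"
        have uU: "u \<in> U"
        proof -
          have "(c + s * a + B) ^ d = B ^ d" using eq2 unfolding pr a_def B_def .
          then have "u ^ d = 1" unfolding u_def using B0 by (simp add: power_divide)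
          then show ?thesis unfolding U_def by simp
        qed
        have "(u - 1) * B = c + s * a"
          unfolding u_def using B0 by (simp add: field_simps)
        then have uB: "(u - 1) * B = c * E / (E - L)" using rval by simp
        have aB: "a ^ l = B ^ e" unfolding a_def B_def by (simp add: power_mult[symmetric] mult.commute)
        have "k1 u * c ^ l = (u - 1) ^ e * (L * c / ((E - L) * s)) ^ l"
          unfolding k1_def by (simp add: power_mult_distrib[symmetric] algebra_simps)
        also have "\<dots> = (u - 1) ^ e * B ^ e" unfolding aval[symmetric] aB ..
        also have "\<dots> = ((u - 1) * B) ^ e" by (simp add: power_mult_distrib)
        also have "\<dots> = k2 * c ^ e" unfolding uB k2_def by (simp add: power_mult_distrib power_divide algebra_simps)
        finally have "poly (Q u) c = 0" unfolding Q_def by (simp add: poly_monom)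
        then show False using cQ[OF uU] by simp
      qed
    qed
    then show ?thesis using dr lr ds r0 c0 by (intro exI[of _ r]) simp
  qed
qed



definition B0 :: "nat \<Rightarrow> 'a::comm_ring_1 poly" where "B0 n = [:-1, 1:] ^ (n - 1)"
definition A0 :: "nat \<Rightarrow> 'a::comm_ring_1 poly" where
  "A0 n = smult 2 ([:0, 1:] * B0 n) - smult 2 (monom 1 n)"
definition rho :: "nat \<Rightarrow> 'a \<Rightarrow> 'a::comm_ring_1 poly" where "rho n s = A0 n + smult s (B0 n)"

lemma key_rho: "[:s, 2:] * B0 n = rho n s + smult 2 (monom 1 n)"
proof -
  have "[:s, 2:] = [:s:] + smult 2 [:0, 1:]" by simp
  then show ?thesis unfolding rho_def A0_def by (simp add: algebra_simps)
qed

lemma coeff_rho_ge: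
  fixes s :: "'a::comm_ring_1"
  assumes "n \<ge> 1" "j \<ge> n"
  shows "coeff (rho n s) j = 0"
proof -
  have cB: "coeff (B0 n :: 'a poly) i = 0" if "i > n - 1" for i
  proof -
    have "degree ([:-1, 1:] ^ (n - 1) :: 'a poly) = n - 1" by (rule degree_linear_power)
    then show ?thesis unfolding B0_def using that coeff_eq_0 by metis
  qed
  have cB1: "coeff (B0 n :: 'a poly) (n - 1) = 1"
    unfolding B0_def using coeff_linear_power[of "-1::'a" "n - 1"] by simp
  have c1: "coeff ([:0, 1:] * B0 n :: 'a poly) j = coeff (B0 n) (j - 1)"
    using assms by (cases j) (auto simp: coeff_pCons)
  have "coeff (rho n s) j = 2 * coeff (B0 n) (j - 1) - 2 * coeff (monom 1 n) j + s * coeff (B0 n) j"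
    unfolding rho_def A0_def coeff_add coeff_diff coeff_smult c1 by simp
  then show ?thesis using assms cB cB1
    by (cases "j = n") (auto simp: coeff_monom)
qed

lemma construction2:
  fixes s p :: "'a::alg_closed_field"
  assumes n3: "n \<ge> 3" and nodd: "n = 2 * \<delta> + 1" and chd: "\<not> CHAR('a) dvd 2"
    and cop: "coprime n (2::nat)" and mdef: "m = 2 * n"
    and s0: "s \<noteq> 0" and Ls: "coeff (rho n s) (n - 1) \<noteq> 0"
    and p2: "p ^ 2 * (2 * coeff (rho n s) (n - 1)) = 1"
    and sqf: "\<And>\<alpha>. poly (rho n s) \<alpha> = 0 \<Longrightarrow> poly (pderiv (rho n s)) \<alpha> \<noteq> 0"
  shows "reachable TYPE('a) n 2 m"
proof -
  have "of_nat 2 = (0::'a) \<longleftrightarrow> CHAR('a) dvd 2" by (rule of_nat_eq_0_iff_char_dvd)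
  then have two: "(2::'a) \<noteq> 0" using chd by simp
  define L where "L = coeff (rho n s) (n - 1)"
  define \<rho> where "\<rho> = rho n s"
  define X :: "'a poly" where "X = [:0, 1:]"
  have p0: "p \<noteq> 0" using p2 by auto
  have d1: "\<delta> \<ge> 1" using n3 nodd by simp
  have degrho: "degree \<rho> = n - 1"
  proof -
    have "degree \<rho> \<le> n - 1" unfolding \<rho>_def
      by (rule degree_le) (use coeff_rho_ge[of n _ s] n3 in auto)
    moreover have "coeff \<rho> (n - 1) \<noteq> 0" using Ls unfolding \<rho>_def .
    ultimately show ?thesis by (metis le_antisym le_degree)
  qed
  have lcrho: "lead_coeff \<rho> = L" using degrho unfolding L_def \<rho>_def by simp
  have rho0: "\<rho> \<noteq> 0" using Ls unfolding \<rho>_def by auto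
  define f where "f = smult (p ^ 2) (\<rho> * [:s, 2:])"
  have sig0: "[:s, 2::'a:] \<noteq> 0" using two by simp
  have dsig: "degree [:s, 2::'a:] = 1" using two by simp
  have dmul: "degree (\<rho> * [:s, 2:]) = degree \<rho> + degree [:s, 2::'a:]" by (rule degree_mult_eq[OF rho0 sig0])
  have degf: "degree f = n" unfolding f_def using p0 dmul dsig degrho n3 by simp
  have lmul: "lead_coeff (\<rho> * [:s, 2:]) = lead_coeff \<rho> * lead_coeff [:s, 2::'a:]" by (rule lead_coeff_mult)
  have lcf: "lead_coeff f = 1" unfolding f_def using p0 lmul dsig lcrho p2 two
    by (simp add: L_def algebra_simps)
  define v where "v = smult p (monom 1 n + \<rho>)"
  have degv: "degree v = n" unfolding v_def using p0 degrho n3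
    by (simp add: degree_add_eq_left degree_monom_eq)
  define w :: "'a poly" where "w = [:-1, 1:] ^ \<delta>"
  have B0w: "B0 n = w ^ 2" unfolding B0_def w_def using nodd by (simp add: power_mult[symmetric] mult.commute)
  have ident: "v ^ 2 - f * w ^ 2 = smult (p ^ 2) (monom 1 (2 * n))"
  proof -
    have "f * w ^ 2 = smult (p ^ 2) (\<rho> * ([:s, 2:] * B0 n))" unfolding f_def B0w by (simp only: mult_smult_left mult.assoc)
    also have "\<dots> = smult (p ^ 2) (\<rho> * (\<rho> + smult 2 (monom 1 n)))" unfolding key_rho \<rho>_def ..
    finally have fw: "f * w ^ 2 = smult (p ^ 2) (\<rho> * (\<rho> + smult 2 (monom 1 n)))" .
    have "monom (1::'a) (2 * n) = monom 1 n * monom 1 n" by (simp add: mult_monom mult_2)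
    moreover have two_mult: "(2::'a poly) * q = smult 2 q" for q
      by (metis of_nat_mult_conv_smult of_nat_numeral)
    ultimately show ?thesis unfolding fw v_def by (simp add: power2_eq_square algebra_simps smult_add_right two_mult)
  qed
  have n0: "n > 0" and m0: "m > 0" using n3 mdef by auto
  have w0: "poly w 0 \<noteq> 0" unfolding w_def by simp
  have w1: "poly w 1 = 0" unfolding w_def using d1 by (simp add: zero_power)
  have degw: "degree w = \<delta>" unfolding w_def by (rule degree_linear_power)
  have wnz: "w \<noteq> 0" using w0 by auto
  have rho1: "poly \<rho> 1 = -2" unfolding \<rho>_def rho_def A0_def B0_def using n3 by (simp add: poly_monom zero_power)
  have rho00: "poly \<rho> 0 = s * (-1) ^ (n - 1)" unfolding \<rho>_def rho_def A0_def B0_def using n3 by (simp add: poly_monom zero_power)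
  have v1: "poly v 1 = - p" unfolding v_def using rho1 by (simp add: poly_monom)
  have v00: "poly v 0 = p * (s * (-1) ^ (n - 1))" unfolding v_def using rho00 n0 by (simp add: poly_monom zero_power)
  have v0nz: "poly v 0 \<noteq> 0" using v00 p0 s0 by simp
  have vnz: "v \<noteq> 0" using v0nz by auto
  define S where "S = (\<Sum>j<m. X ^ j)"
  define w' where "w' = (- S) ^ \<delta>"
  have lin: "[:-1, 1:] * (- S) = 1 - X ^ m"
  proof -
    have "X ^ Suc (m - 1) - 1 ^ Suc (m - 1) = (X - 1) * (\<Sum>p<Suc (m - 1). X ^ p * 1 ^ (m - 1 - p))"
      by (rule diff_power_eq_sum)
    then have h1: "X ^ m - 1 = (X - 1) * S" unfolding S_def using m0 by simp
    have h2: "[:-1, 1:] = X - 1" unfolding X_def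
      by (rule poly_eqI) (simp add: coeff_pCons split: nat.split)
    show ?thesis unfolding h2 mult_minus_right h1[symmetric] by simp
  qed
  have ww: "w * w' = (1 - X ^ m) ^ \<delta>" unfolding w_def w'_def using lin by (simp add: power_mult_distrib[symmetric])
  have Xm: "[:0, 1:] ^ m = X ^ m" unfolding X_def ..
  have wwdvd: "[:0, 1:] ^ m dvd (w * w' - 1)"
  proof -
    have "((1 - X ^ m) - 1) dvd ((1 - X ^ m) ^ \<delta> - 1 ^ \<delta>)" by (rule dvd_power_diff)
    then have "- (X ^ m) dvd (w * w' - 1)" unfolding ww by simp
    then show ?thesis unfolding Xm by simp
  qed
  have Xdvd: "[:0, 1:] dvd ([:0, 1:] ^ m :: 'a poly)" using m0 by (intro dvd_power) simp_all
  have pw: "poly w 0 * poly w' 0 = 1"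
  proof -
    have "[:- 0, 1:] dvd (w * w' - 1)" using Xdvd wwdvd dvd_trans by simp
    then have "poly (w * w' - 1) 0 = 0" using poly_eq_0_iff_dvd by blast
    then show ?thesis by simp
  qed
  define V where "V = v * w'"
  define b where "b = poly V 0"
  have b0: "b \<noteq> 0" unfolding b_def V_def using v0nz pw by auto
  have vsq: "v ^ 2 = f * w ^ 2 + smult (p ^ 2) (monom 1 (2 * n))" using ident by (simp add: algebra_simps)
  have Vdvd: "[:0, 1:] ^ m dvd (V ^ 2 - f)"
  proof -
    have e: "V ^ 2 - f = f * ((w * w' - 1) * (w * w' + 1)) + smult (p ^ 2) (monom 1 (2 * n)) * w' ^ 2"
    proof -
      have "V ^ 2 = v ^ 2 * w' ^ 2" unfolding V_def by (simp add: power_mult_distrib)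
      also have "\<dots> = (f * w ^ 2 + smult (p ^ 2) (monom 1 (2 * n))) * w' ^ 2" unfolding vsq ..
      finally have "V ^ 2 - f = (f * w ^ 2 + smult (p ^ 2) (monom 1 (2 * n))) * w' ^ 2 - f" by simp
      then show ?thesis by (simp add: algebra_simps power2_eq_square)
    qed
    have "[:0, 1:] ^ m dvd f * ((w * w' - 1) * (w * w' + 1))"
      using wwdvd by (intro dvd_mult dvd_mult2)
    moreover have "[:0, 1:] ^ m dvd smult (p ^ 2) (monom 1 (2 * n)) * w' ^ 2"
      unfolding mdef by (intro dvd_mult2) (simp add: monom_altdef dvd_smult)
    ultimately show ?thesis unfolding e by (rule dvd_add)
  qed
  have identx: "poly v x ^ 2 - poly f x * poly w x ^ 2 = p ^ 2 * x ^ (2 * n)" for x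
    using arg_cong[OF ident, of "\<lambda>q. poly q x"] by (simp add: poly_monom)
  have fb: "poly f 0 = b ^ 2"
  proof -
    have "poly v 0 ^ 2 = poly f 0 * poly w 0 ^ 2" using identx[of 0] n0 by (simp add: zero_power)
    then have "poly v 0 ^ 2 * poly w' 0 ^ 2 = poly f 0 * (poly w 0 * poly w' 0) ^ 2"
      by (simp add: power_mult_distrib)
    then show ?thesis unfolding b_def V_def using pw by (simp add: power_mult_distrib)
  qed
  have oc: "on_curve f 2 0 b" unfolding on_curve_def using fb by simp
  define hs0 where "hs0 = (\<lambda>i::nat. if i = 0 then v else if i = 1 then - w else (0::'a poly))"
  have hs0_2: "\<And>i. i \<ge> 2 \<Longrightarrow> hs0 i = 0" unfolding hs0_def by auto
  have mpA: "\<exists>i<2. hs0 i \<noteq> 0" using vnz by (intro exI[of _ 0]) (simp add: hs0_def)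
  have mpB: "pole_order (degree f) 2 hs0 = m"
  proof -
    have "pole_order (degree f) 2 hs0 = max (2 * degree (hs0 0)) (2 * degree (hs0 1) + n)"
      unfolding degf by (rule pole_order_two[OF _ hs0_2]) (use vnz wnz in \<open>simp_all add: hs0_def\<close>)
    also have "\<dots> = m" using degv degw nodd mdef by (simp add: hs0_def)
    finally show ?thesis .
  qed
  have mpC: "\<forall>x y. on_curve f 2 x y \<and> eval_fun 2 hs0 x y = 0 \<longrightarrow> x = 0 \<and> y = b"
  proof (intro allI impI)
    fix x y assume a: "on_curve f 2 x y \<and> eval_fun 2 hs0 x y = 0"
    have "eval_fun 2 hs0 x y = poly v x - poly w x * y"
      using eval_fun_two[OF _ hs0_2] by (simp add: hs0_def)
    then have vx: "poly v x = poly w x * y" using a by simp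
    have "p ^ 2 * x ^ (2 * n) = 0"
      using identx[of x] a vx unfolding on_curve_def by (simp add: power_mult_distrib algebra_simps)
    then have x0: "x = 0" using p0 by simp
    have "y = poly v 0 * poly w' 0"
    proof -
      have "poly v 0 * poly w' 0 = y * (poly w 0 * poly w' 0)" using vx x0 by simp
      then show ?thesis using pw by simp
    qed
    then show "x = 0 \<and> y = b" using x0 unfolding b_def V_def by simp
  qed
  have mp: "multiple_principal f 2 m 0 b"
    unfolding multiple_principal_def using mpA mpB mpC by blast
  have minimal: "\<not> multiple_principal f 2 k 0 b" if k: "0 < k" "k < m" for k
  proof
    assume "multiple_principal f 2 k 0 b"
    then obtain hs where hnz: "\<exists>i<2. hs i \<noteq> 0" and po: "pole_order n 2 hs = k"
      and zeros: "\<forall>x y. on_curve f 2 x y \<and> eval_fun 2 hs x y = 0 \<longrightarrow> x = 0 \<and> y = b"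
      unfolding multiple_principal_def degf by blast
    have kdvd: "[:0, 1:] ^ k dvd poly (Phi 2 hs) V"
      by (rule norm_argument[OF _ cop chd lcf degf n0 b0 b_def[symmetric] Vdvd hnz po k(1) k(2) zeros]) simp
    define a0 where "a0 = hs 0"
    define a1 where "a1 = hs 1"
    have PhiV: "poly (Phi 2 hs) V = a0 + a1 * V" unfolding poly_Phi a0_def a1_def
      by (simp add: numeral_2_eq_2)
    have wfin: "finite {2 * degree (hs i) + n * i | i. i < 2 \<and> hs i \<noteq> 0}" by simp
    have wle: "2 * degree (hs i) + n * i \<le> k" if "i < 2" "hs i \<noteq> 0" for i
      unfolding po[symmetric] pole_order_def using that by (intro Max_ge[OF wfin]) blast
    have wa0: "a0 \<noteq> 0 \<Longrightarrow> 2 * degree a0 \<le> k" using wle[of 0] unfolding a0_def by simp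
    have wa1: "a1 \<noteq> 0 \<Longrightarrow> 2 * degree a1 + n \<le> k" using wle[of 1] unfolding a1_def by simp
    define P where "P = a0 * w + a1 * v"
    have kmdvd: "[:0, 1:] ^ k dvd ([:0, 1:] ^ m :: 'a poly)" using k by (intro le_imp_power_dvd) simp
    have Pdvd: "[:0, 1:] ^ k dvd P"
    proof -
      have e: "P = (a0 + a1 * V) * w - a1 * v * (w * w' - 1)"
        unfolding P_def V_def by (simp add: algebra_simps)
      have "[:0, 1:] ^ k dvd (a0 + a1 * V) * w" using kdvd PhiV by (simp add: dvd_mult2)
      moreover have "[:0, 1:] ^ k dvd a1 * v * (w * w' - 1)"
        using dvd_trans[OF kmdvd wwdvd] by (rule dvd_mult)
      ultimately show ?thesis unfolding e by (rule dvd_diff)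
    qed
    have ordP: "k \<le> order 0 P" if "P \<noteq> 0" using Pdvd that order_divides[of 0 k P] by simp
    show False
    proof (cases "a1 = 0")
      case True
      obtain i where i: "i < 2" "hs i \<noteq> 0" using hnz by blast
      have "i = 0 \<or> i = 1" using i(1) by arith
      then have a0nz: "a0 \<noteq> 0" using i(2) True unfolding a0_def a1_def by auto
      have Pe: "P = a0 * w" unfolding P_def using True by simp
      then have Pnz: "P \<noteq> 0" using a0nz wnz by simp
      have "k \<le> order 0 (a0 * w)" using ordP[OF Pnz] Pe by simp
      also have "\<dots> = order 0 a0" using order_mult[of a0 w 0] a0nz wnz order_0I[OF w0] by simp
      also have "\<dots> \<le> degree a0" by (rule order_degree[OF a0nz])
      finally show False using wa0[OF a0nz] k(1) by simp
    next
      case False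
      then have a1nz: "a1 \<noteq> 0" .
      have kn: "2 * degree a1 + n \<le> k" by (rule wa1[OF a1nz])
      have dv1: "degree (a1 * v) = degree a1 + n" using a1nz vnz degv by (simp add: degree_mult_eq)
      have da0w: "degree (a0 * w) < k" if "n \<le> k"
      proof (cases "a0 = 0")
        case True then show ?thesis using k by simp
      next
        case F: False
        have "degree (a0 * w) = degree a0 + \<delta>" using F wnz degw by (simp add: degree_mult_eq)
        then show ?thesis using wa0[OF F] that nodd by simp
      qed
      show False
      proof (cases "P = 0")
        case True
        then have eq: "a0 * w = - (a1 * v)" unfolding P_def by (simp add: eq_neg_iff_add_eq_0)
        have a1v: "a1 * v \<noteq> 0" using a1nz vnz by simp
        then have a0w: "a0 * w \<noteq> 0" using eq by simp
        then have a0nz: "a0 \<noteq> 0" by auto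
        have "order 1 (a0 * w) = order 1 a0 + order 1 w" by (rule order_mult[OF a0w])
        moreover have "order 1 w = \<delta>" unfolding w_def using order_power_n_n[of "1::'a" \<delta>] by simp
        moreover have "order 1 (a1 * v) = order 1 a1" using order_mult[OF a1v] order_0I[of v 1] v1 p0 by simp
        ultimately have "\<delta> \<le> order 1 a1" using eq by simp
        also have "\<dots> \<le> degree a1" by (rule order_degree[OF a1nz])
        finally have "\<delta> \<le> degree a1" .
        moreover have "degree a0 + \<delta> = degree a1 + n"
        proof -
          have "degree (a0 * w) = degree a0 + \<delta>" using a0nz wnz degw by (simp add: degree_mult_eq)
          moreover have "degree (a0 * w) = degree (a1 * v)" using eq by simp
          ultimately show ?thesis using dv1 by simp
        qed
        ultimately have "n \<le> degree a0" by simp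
        then show False using wa0[OF a0nz] k(2) mdef by simp
      next
        case False
        have "k \<le> order 0 P" by (rule ordP[OF False])
        also have "\<dots> \<le> degree P" by (rule order_degree[OF False])
        finally have kP: "k \<le> degree P" .
        show False
        proof (cases "n < k")
          case True
          have "degree P \<le> max (degree (a0 * w)) (degree (a1 * v))" unfolding P_def by (rule degree_add_le_max)
          moreover have "degree (a1 * v) < k" using dv1 kn True by simp
          ultimately show False using da0w[of] True kP by simp
        next
          case nk: False
          then have kn': "k = n" using kn by simp
          then have da1: "degree a1 = 0" using kn by simp
          define Q where "Q = a0 * w + a1 * smult p \<rho>"
          have PQ: "P = Q + a1 * smult p (monom 1 n)" unfolding P_def Q_def v_def by (simp add: algebra_simps smult_add_right)
          have "[:0, 1:] ^ n dvd a1 * smult p (monom 1 n)" by (intro dvd_mult) (simp add: monom_altdef dvd_smult)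
          then have Qdvd: "[:0, 1:] ^ n dvd Q" using Pdvd kn' PQ by (metis dvd_add_left_iff)
          have dQ: "degree Q < n"
          proof -
            have "degree (a1 * smult p \<rho>) \<le> degree a1 + degree (smult p \<rho>)" by (rule degree_mult_le)
            also have "\<dots> = n - 1" using da1 p0 degrho by simp
            finally have "degree (a1 * smult p \<rho>) < n" using n0 by simp
            moreover have "degree (a0 * w) < n" using da0w[of] kn' by simp
            ultimately show ?thesis unfolding Q_def by (simp add: degree_add_less)
          qed
          have Q0: "Q = 0"
          proof (rule ccontr)
            assume "Q \<noteq> 0"
            then have "n \<le> order 0 Q" using Qdvd order_divides[of 0 n Q] by simp
            also have "\<dots> \<le> degree Q" by (rule order_degree[OF \<open>Q \<noteq> 0\<close>])
            finally show False using dQ by simp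
          qed
          have "poly Q 1 = poly a1 1 * (p * (-2))" unfolding Q_def using w1 rho1 by simp
          moreover have "poly a1 1 \<noteq> 0"
          proof -
            obtain c where "a1 = [:c:]" using da1 by (metis degree_eq_zeroE)
            then show ?thesis using a1nz by simp
          qed
          ultimately show False using Q0 p0 two by simp
        qed
      qed
    qed
  qed
  have mn: "n < m" using mdef n0 by simp
  have "point_has_order f 2 m 0 b"
    unfolding point_has_order_def using oc mn mp minimal by auto
  moreover have "rsquarefree f"
  proof (rule rsquarefreeI')
    show "f \<noteq> 0" using lcf by auto
  next
    fix \<alpha> assume fa: "poly f \<alpha> = 0"
    show "poly (pderiv f) \<alpha> \<noteq> 0"
    proof
      assume fd: "poly (pderiv f) \<alpha> = 0"
      have "p ^ 2 * (poly \<rho> \<alpha> * (s + 2 * \<alpha>)) = 0" using fa unfolding f_def by (simp add: algebra_simps)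
      then have g0: "poly \<rho> \<alpha> * (s + 2 * \<alpha>) = 0" using p0 by simp
      have "p ^ 2 * (poly (pderiv \<rho>) \<alpha> * (s + 2 * \<alpha>) + poly \<rho> \<alpha> * 2) = 0"
      proof -
        have "pderiv f = smult (p ^ 2) (\<rho> * pderiv [:s, 2:] + pderiv \<rho> * [:s, 2:])"
          unfolding f_def by (simp only: pderiv_smult pderiv_mult mult.commute[of "[:s, 2:]"])
        moreover have "pderiv [:s, 2::'a:] = [:2:]" by (simp add: pderiv_pCons)
        ultimately have "poly (pderiv f) \<alpha> = p ^ 2 * (poly \<rho> \<alpha> * 2 + poly (pderiv \<rho>) \<alpha> * (s + 2 * \<alpha>))"
          by (simp add: algebra_simps)
        then show ?thesis using fd by (simp add: algebra_simps)
      qed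
      then have g1: "poly (pderiv \<rho>) \<alpha> * (s + 2 * \<alpha>) + poly \<rho> \<alpha> * 2 = 0" using p0 by simp
      show False
      proof (cases "s + 2 * \<alpha> = 0")
        case True
        then have r0: "poly \<rho> \<alpha> = 0" using g1 two by simp
        have "poly ([:s, 2:] * B0 n) \<alpha> = poly (rho n s + smult 2 (monom 1 n)) \<alpha>" using key_rho by metis
        moreover have "poly ([:s, 2:] * B0 n) \<alpha> = (s + 2 * \<alpha>) * poly (B0 n) \<alpha>" by (simp add: algebra_simps)
        moreover have "poly (rho n s + smult 2 (monom 1 n)) \<alpha> = poly \<rho> \<alpha> + 2 * \<alpha> ^ n"
          unfolding \<rho>_def by (simp add: poly_monom)
        ultimately have "0 = 2 * \<alpha> ^ n" using True r0 by simp
        then have "\<alpha> = 0" using two by simp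
        then show False using True s0 by simp
      next
        case False
        then have r0: "poly \<rho> \<alpha> = 0" using g0 by simp
        then have "poly (pderiv \<rho>) \<alpha> = 0" using g1 False by simp
        then show False using sqf r0 unfolding \<rho>_def by blast
      qed
    qed
  qed
  moreover have "m > 1" using mn n3 by simp
  ultimately show ?thesis unfolding reachable_def using lcf degf by blast
qed



lemma pencil_finite:
  fixes A B :: "'a::field poly"
  assumes AB: "\<And>\<alpha>. poly B \<alpha> = 0 \<Longrightarrow> poly A \<alpha> \<noteq> 0"
    and Wr: "pderiv A * B - A * pderiv B \<noteq> 0"
  shows "finite {s. \<exists>\<alpha>. poly (A + smult s B) \<alpha> = 0 \<and> poly (pderiv (A + smult s B)) \<alpha> = 0}"
proof -
  let ?W = "pderiv A * B - A * pderiv B"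
  have "{s. \<exists>\<alpha>. poly (A + smult s B) \<alpha> = 0 \<and> poly (pderiv (A + smult s B)) \<alpha> = 0}
        \<subseteq> (\<lambda>\<alpha>. - poly A \<alpha> / poly B \<alpha>) ` {\<alpha>. poly ?W \<alpha> = 0}"
  proof
    fix s assume "s \<in> {s. \<exists>\<alpha>. poly (A + smult s B) \<alpha> = 0 \<and> poly (pderiv (A + smult s B)) \<alpha> = 0}"
    then obtain \<alpha> where a1: "poly A \<alpha> + s * poly B \<alpha> = 0"
      and a2: "poly (pderiv A) \<alpha> + s * poly (pderiv B) \<alpha> = 0"
      by (auto simp: pderiv_add pderiv_smult)
    have B0: "poly B \<alpha> \<noteq> 0" using AB a1 by force
    have sv: "s = - poly A \<alpha> / poly B \<alpha>" using a1 B0 by (simp add: field_simps eq_neg_iff_add_eq_0)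
    have "poly ?W \<alpha> = poly (pderiv A) \<alpha> * poly B \<alpha> - poly A \<alpha> * poly (pderiv B) \<alpha>" by simp
    also have "\<dots> = (- s * poly (pderiv B) \<alpha>) * poly B \<alpha> - (- s * poly B \<alpha>) * poly (pderiv B) \<alpha>"
      using a1 a2 by (metis add.commute add_eq_0_iff_both_eq_0 eq_neg_iff_add_eq_0 minus_mult_left)
    also have "\<dots> = 0" by simp
    finally show "s \<in> (\<lambda>\<alpha>. - poly A \<alpha> / poly B \<alpha>) ` {\<alpha>. poly ?W \<alpha> = 0}" using sv by blast
  qed
  moreover have "finite ((\<lambda>\<alpha>. - poly A \<alpha> / poly B \<alpha>) ` {\<alpha>. poly ?W \<alpha> = 0})"
    using poly_roots_finite[OF Wr] by simp
  ultimately show ?thesis using finite_subset by blast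
qed

lemma exists_s:
  assumes n3: "n \<ge> 3" and two: "(2::'a::alg_closed_field) \<noteq> 0"
  shows "\<exists>s p :: 'a. s \<noteq> 0 \<and> coeff (rho n s) (n - 1) \<noteq> 0 \<and> p ^ 2 * (2 * coeff (rho n s) (n - 1)) = 1 \<and>
           (\<forall>\<alpha>. poly (rho n s) \<alpha> = 0 \<longrightarrow> poly (pderiv (rho n s)) \<alpha> \<noteq> 0)"
proof -
  define A :: "'a poly" where "A = A0 n"
  define B :: "'a poly" where "B = B0 n"
  have AB: "poly A \<alpha> \<noteq> 0" if "poly B \<alpha> = 0" for \<alpha>
  proof -
    have "(\<alpha> - 1) ^ (n - 1) = 0" using that unfolding B_def B0_def by (simp add: algebra_simps)
    then have "\<alpha> = 1" by simp
    then show ?thesis unfolding A_def A0_def B0_def using n3 two by (simp add: poly_monom zero_power)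
  qed
  have Wr: "pderiv A * B - A * pderiv B \<noteq> 0"
  proof -
    have A00: "poly A 0 = 0" unfolding A_def A0_def using n3 by (simp add: poly_monom zero_power)
    have "pderiv A = smult 2 (B + [:0, 1:] * pderiv B) - smult 2 (monom (of_nat n) (n - 1))"
      unfolding A_def A0_def B_def by (simp add: pderiv_diff pderiv_smult pderiv_mult pderiv_monom pderiv_pCons algebra_simps smult_add_right)
    then have "poly (pderiv A) 0 = 2 * poly B 0" using n3 by (simp add: poly_monom zero_power)
    then have "poly (pderiv A * B - A * pderiv B) 0 = 2 * poly B 0 ^ 2" using A00 by (simp add: power2_eq_square)
    moreover have "poly B 0 \<noteq> 0" unfolding B_def B0_def by simp
    ultimately have "poly (pderiv A * B - A * pderiv B) 0 \<noteq> 0" using two by simp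
    then show ?thesis by (metis poly_0)
  qed
  have fin: "finite {s. \<exists>\<alpha>. poly (A + smult s B) \<alpha> = 0 \<and> poly (pderiv (A + smult s B)) \<alpha> = 0}"
    by (rule pencil_finite[OF AB Wr])
  have cB: "coeff (B0 n :: 'a poly) (n - 1) = 1"
    unfolding B0_def using coeff_linear_power[of "-1::'a" "n - 1"] by simp
  have Lc: "coeff (rho n s) (n - 1) = coeff A (n - 1) + s" for s
    unfolding rho_def A_def using cB by simp
  define bad where "bad = {s. \<exists>\<alpha>. poly (A + smult s B) \<alpha> = 0 \<and> poly (pderiv (A + smult s B)) \<alpha> = 0} \<union> {0, - coeff A (n - 1)}"
  have "finite bad" unfolding bad_def using fin by simp
  then obtain s where s: "s \<notin> bad" using ex_new_if_finite[OF infinite_alg_closed] by blast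
  have s0: "s \<noteq> 0" using s unfolding bad_def by blast
  have L0: "coeff (rho n s) (n - 1) \<noteq> 0" using s unfolding bad_def Lc by (auto simp: eq_neg_iff_add_eq_0 add.commute)
  have sq: "\<forall>\<alpha>. poly (rho n s) \<alpha> = 0 \<longrightarrow> poly (pderiv (rho n s)) \<alpha> \<noteq> 0"
    using s unfolding bad_def rho_def A_def B_def by blast
  obtain p where p: "p ^ 2 = inverse (2 * coeff (rho n s) (n - 1))"
    using nth_root_exists[of 2 "inverse (2 * coeff (rho n s) (n - 1))"] by auto
  have "p ^ 2 * (2 * coeff (rho n s) (n - 1)) = 1" unfolding p using L0 two by (simp add: field_simps)
  then show ?thesis using s0 L0 sq by blast
qed



theorem mainTheorem3:
  fixes d n m :: nat
  assumes "1 < d" and "d < n" and "coprime n d"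
    and "\<not> CHAR('a::alg_closed_field) dvd d"
    and "m > n" and "d dvd m"
    and "int n - int m + int (m div d) \<ge> 0"
    and "CHAR('a) = 0 \<or> CHAR('a) > n"
  shows "reachable TYPE('a) n d m"
proof -
  note a = assms
  have d2: "d \<ge> 2" using a(1) by simp
  define l where "l = m div d"
  have mdl: "m = d * l" unfolding l_def using a(6) by simp
  have l0: "l > 0" using mdl a(5) by (cases l) auto
  have nlm: "n + l \<ge> m" using a(7) unfolding l_def by linarith
  define e where "e = n + l - m"
  have el: "e < l" unfolding e_def using a(5) nlm by simp
  have ne: "n = e + l * (d - 1)"
  proof -
    have "l * (d - 1) + l = m" using mdl d2 by (cases d) (auto simp: algebra_simps)
    then show ?thesis unfolding e_def using nlm by simp
  qed
  have ofn: "of_nat j \<noteq> (0::'a)" if "0 < j" "j \<le> n" for j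
  proof
    assume "of_nat j = (0::'a)"
    then have "CHAR('a) dvd j" by (simp add: of_nat_eq_0_iff_char_dvd)
    then show False using a(8) that by (auto dest: dvd_imp_le)
  qed
  have ll: "l * 1 \<le> l * (d - 1)" using d2 by (intro mult_le_mono2) simp
  have ln: "l \<le> n" using ne ll by linarith
  show ?thesis
  proof (cases "l < n")
    case True
    obtain r :: "'a poly" where r: "degree r = e" "of_nat d * lead_coeff r = 1" "poly r 0 \<noteq> 0"
      "rsquarefree ((monom 1 l + r) ^ d - monom 1 (d * l))"
    proof -
      have L1: "of_nat (l - e) \<noteq> (0::'a)" using el ln by (intro ofn) auto
      have L2: "e > 0 \<Longrightarrow> of_nat e \<noteq> (0::'a)" using el ln by (intro ofn) auto
      show ?thesis using exists_r1[OF d2 el a(4) ofn[OF l0 ln] L1 L2] that by blast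
    qed
    show ?thesis
      by (rule construction1[OF d2 a(3) a(4) _ r(2) r(3) _ True mdl r(4)]) (use r(1) el ne in auto)
  next
    case False
    then have ln': "l = n" using ln by simp
    have "l * (d - 1) \<ge> l * 1" using d2 by (intro mult_le_mono2) simp
    then have e0: "e = 0" and dd: "l * (d - 1) = l * 1" using ne ln' by linarith+
    then have "d - 1 = 1" using l0 by (metis mult_left_cancel not_gr0)
    then have d22: "d = 2" by simp
    have m2: "m = 2 * n" using mdl ln' d22 by simp
    have nodd: "odd n" using a(3) d22 by simp
    then obtain \<delta> where \<delta>: "n = 2 * \<delta> + 1" by (metis oddE)
    have n3: "n \<ge> 3" using a(2) d22 by simp
    have two: "(2::'a) \<noteq> 0" using ofn[of 2] n3 by simp
    obtain s p :: 'a where sp: "s \<noteq> 0" "coeff (rho n s) (n - 1) \<noteq> 0" "p ^ 2 * (2 * coeff (rho n s) (n - 1)) = 1"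
      "\<forall>\<alpha>. poly (rho n s) \<alpha> = 0 \<longrightarrow> poly (pderiv (rho n s)) \<alpha> \<noteq> 0"
      using exists_s[OF n3 two] by blast
    have "reachable TYPE('a) n 2 m"
      by (rule construction2[OF n3 \<delta> _ _ m2 sp(1) sp(2) sp(3)]) (use a(3) a(4) d22 sp(4) in auto)
    then show ?thesis using d22 by simp
  qed
qed


end
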